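(* Let $d\ge2$ and let $C_1,C_2$ be Archimedean $d$-copulas whose generators $\phi_1,\phi_2$ are regularly varying at $0$ (with indices $-\alpha_1,-\alpha_2$, $\alpha_i\in[0,\infty]$). If $C_1<_{TD}C_2$, then $C_1\le_{loc}C_2$.
   Context: A generator is a continuous, strictly decreasing function $\phi:[0,1]\to[0,\infty]$ with $\phi(1)=0$; it is strict if $\lim_{s\searrow0}\phi(s)=\infty$. A $d$-copula $C$ (grounded, $d$-increasing, uniform margins) is Archimedean with generator $\phi$ if $C(\boldsymbol u)=\phi^{[-1]}(\sum_{k=1}^d\phi(u_k))$ with $\phi^{[-1]}(x)=\inf\{t\in[0,1]:\phi(t)\le x\}$. $\phi$ is regularly varying at $0$ with index $-\alpha$, $\alpha\in[0,\infty)$, if $\lim_{s\searrow0}\phi(ts)/\phi(s)=t^{-\alpha}$ for all $t>0$; with index $-\infty$ if this limit is $\infty$ for $t\in(0,1)$, $1$ for $t=1$, $0$ for $t>1$. Tail dependence function: $\Lambda(\boldsymbol w;C)=\lim_{s\searrow0}C(s\boldsymbol w)/s$. $C_1<_{TD}C_2$ means $\Lambda(\boldsymbol w;C_1)<\Lambda(\boldsymbol w;C_2)$ for all $\boldsymbol w\in(0,\infty)^d$; $C_1\le_{loc}C_2$ means there is $\varepsilon>0$ with $C_1\le C_2$ on $B_\varepsilon(\boldsymbol 0)\cap[0,1]^d$ (Euclidean ball). *)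

theory Defs
  imports "HOL-Analysis.Analysis"
begin

definition in_unit_cube :: "real^'d \<Rightarrow> bool" where
  "in_unit_cube u \<longleftrightarrow> (\<forall>i. 0 \<le> u$i \<and> u$i \<le> 1)"

definition generator :: "(real \<Rightarrow> ereal) \<Rightarrow> bool" where
  "generator \<phi> \<longleftrightarrow> continuous_on {0..1} \<phi>
     \<and> (\<forall>s t. 0 \<le> s \<and> s < t \<and> t \<le> 1 \<longrightarrow> \<phi> t < \<phi> s)
     \<and> (\<forall>s\<in>{0..1}. 0 \<le> \<phi> s) \<and> \<phi> 1 = 0"

definition pseudo_inv :: "(real \<Rightarrow> ereal) \<Rightarrow> ereal \<Rightarrow> real" where
  "pseudo_inv \<phi> x = Inf {t \<in> {0..1}. \<phi> t \<le> x}"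

definition grounded :: "(real^'d \<Rightarrow> real) \<Rightarrow> bool" where
  "grounded C \<longleftrightarrow> (\<forall>u. in_unit_cube u \<and> (\<exists>i. u$i = 0) \<longrightarrow> C u = 0)"

definition d_increasing :: "(real^'d \<Rightarrow> real) \<Rightarrow> bool" where
  "d_increasing C \<longleftrightarrow> (\<forall>a b. in_unit_cube a \<and> in_unit_cube b \<and> (\<forall>i. a$i \<le> b$i) \<longrightarrow>
     0 \<le> (\<Sum>S\<in>Pow (UNIV::'d set). (-1) ^ card S * C (\<chi> i. if i \<in> S then a$i else b$i)))"

definition uniform_margins :: "(real^'d \<Rightarrow> real) \<Rightarrow> bool" where
  "uniform_margins C \<longleftrightarrow> (\<forall>u k. in_unit_cube u \<and> (\<forall>j. j \<noteq> k \<longrightarrow> u$j = 1) \<longrightarrow> C u = u$k)"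

definition copula :: "(real^'d \<Rightarrow> real) \<Rightarrow> bool" where
  "copula C \<longleftrightarrow> grounded C \<and> d_increasing C \<and> uniform_margins C"

definition archimedean_copula :: "(real^'d \<Rightarrow> real) \<Rightarrow> (real \<Rightarrow> ereal) \<Rightarrow> bool" where
  "archimedean_copula C \<phi> \<longleftrightarrow> copula C \<and> generator \<phi>
     \<and> (\<forall>u. in_unit_cube u \<longrightarrow> C u = pseudo_inv \<phi> (\<Sum>k\<in>UNIV. \<phi> (u$k)))"

text \<open>Regular variation at 0 with index -alpha, alpha in [0,inf] (as an ereal).
  For s > 0 the generator value is finite, so the ratio is taken of real values.\<close>
definition regularly_varying_at0 :: "(real \<Rightarrow> ereal) \<Rightarrow> ereal \<Rightarrow> bool" where
  "regularly_varying_at0 \<phi> \<alpha> \<longleftrightarrow> 0 \<le> \<alpha> \<and>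
     (if \<alpha> = \<infinity> then
        (\<forall>t. 0 < t \<and> t < 1 \<longrightarrow>
           filterlim (\<lambda>s. real_of_ereal (\<phi> (t * s)) / real_of_ereal (\<phi> s)) at_top (at_right 0))
      \<and> ((\<lambda>s. real_of_ereal (\<phi> s) / real_of_ereal (\<phi> s)) \<longlongrightarrow> 1) (at_right 0)
      \<and> (\<forall>t. 1 < t \<longrightarrow>
           ((\<lambda>s. real_of_ereal (\<phi> (t * s)) / real_of_ereal (\<phi> s)) \<longlongrightarrow> 0) (at_right 0))
      else
        (\<forall>t. 0 < t \<longrightarrow>
           ((\<lambda>s. real_of_ereal (\<phi> (t * s)) / real_of_ereal (\<phi> s)) \<longlongrightarrow> t powr (- real_of_ereal \<alpha>))
             (at_right 0)))"

definition has_tail_dep :: "(real^'d \<Rightarrow> real) \<Rightarrow> real^'d \<Rightarrow> real \<Rightarrow> bool" where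
  "has_tail_dep C w L \<longleftrightarrow> ((\<lambda>s. C (s *\<^sub>R w) / s) \<longlongrightarrow> L) (at_right 0)"

definition TD_less :: "(real^'d \<Rightarrow> real) \<Rightarrow> (real^'d \<Rightarrow> real) \<Rightarrow> bool" where
  "TD_less C1 C2 \<longleftrightarrow> (\<forall>w. (\<forall>i. 0 < w$i) \<longrightarrow>
     (\<exists>L1 L2. has_tail_dep C1 w L1 \<and> has_tail_dep C2 w L2 \<and> L1 < L2))"

definition loc_le :: "(real^'d \<Rightarrow> real) \<Rightarrow> (real^'d \<Rightarrow> real) \<Rightarrow> bool" where
  "loc_le C1 C2 \<longleftrightarrow> (\<exists>\<epsilon>>0. \<forall>u. u \<in> ball 0 \<epsilon> \<and> in_unit_cube u \<longrightarrow> C1 u \<le> C2 u)"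

end

theory Submission
  imports Defs
begin

definition sgen :: "(real \<Rightarrow> real) \<Rightarrow> bool" where
  "sgen f \<longleftrightarrow> continuous_on {0<..1} f \<and> (\<forall>s t. 0 < s \<and> s < t \<and> t \<le> 1 \<longrightarrow> f t < f s)
     \<and> f 1 = 0 \<and> filterlim f at_top (at_right 0)"

lemma sgen_less: "sgen f \<Longrightarrow> 0 < s \<Longrightarrow> s < t \<Longrightarrow> t \<le> 1 \<Longrightarrow> f t < f s"
  unfolding sgen_def by blast

lemma sgen_less_iff: "sgen f \<Longrightarrow> 0 < x \<Longrightarrow> x \<le> 1 \<Longrightarrow> 0 < y \<Longrightarrow> y \<le> 1 \<Longrightarrow> f x < f y \<longleftrightarrow> y < x"
  by (metis linorder_neqE_linordered_idom not_less_iff_gr_or_eq sgen_less)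

lemma sgen_le_iff: "sgen f \<Longrightarrow> 0 < x \<Longrightarrow> x \<le> 1 \<Longrightarrow> 0 < y \<Longrightarrow> y \<le> 1 \<Longrightarrow> f x \<le> f y \<longleftrightarrow> y \<le> x"
  by (meson not_less sgen_less_iff)

lemma sgen_1: "sgen f \<Longrightarrow> f 1 = 0" unfolding sgen_def by blast

lemma sgen_pos: "sgen f \<Longrightarrow> 0 < x \<Longrightarrow> x < 1 \<Longrightarrow> 0 < f x"
  using sgen_less[of f x 1] sgen_1[of f] by simp

lemma sgen_nonneg: "sgen f \<Longrightarrow> 0 < x \<Longrightarrow> x \<le> 1 \<Longrightarrow> 0 \<le> f x"
  using sgen_pos[of f x] sgen_1[of f] by (cases "x = 1") auto

lemma sgen_cont: "sgen f \<Longrightarrow> continuous_on {0<..1} f" unfolding sgen_def by blast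

lemma sgen_ex: assumes "sgen f" "0 \<le> X" shows "\<exists>x. 0 < x \<and> x \<le> 1 \<and> f x = X"
proof -
  have "filterlim f at_top (at_right 0)" using assms unfolding sgen_def by blast
  then have "eventually (\<lambda>x. X \<le> f x) (at_right (0::real))" by (simp add: filterlim_at_top)
  then obtain b where b: "b > 0" "\<And>y. y > 0 \<Longrightarrow> y < b \<Longrightarrow> X \<le> f y"
    unfolding eventually_at_right_field by blast
  define y where "y = min (b/2) (1/2)"
  have y: "0 < y" "y < b" "y \<le> 1" using b by (auto simp: y_def)
  have sub: "{y..1} \<subseteq> {0<..1}" using y by auto
  have "continuous_on {y..1} f"
    using continuous_on_subset[OF sgen_cont[OF assms(1)] sub] .
  moreover have "f 1 \<le> X" using sgen_1[OF assms(1)] assms(2) by simp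
  moreover have "X \<le> f y" using b(2)[of y] y by simp
  ultimately obtain x where "x \<ge> y" "x \<le> 1" "f x = X"
    using IVT2'[of f 1 X y] y(3) by blast
  then show ?thesis using y by (intro exI[of _ x]) auto
qed

definition psi :: "(real \<Rightarrow> real) \<Rightarrow> real \<Rightarrow> real" where
  "psi f X = (THE x. 0 < x \<and> x \<le> 1 \<and> f x = X)"

lemma psi: assumes "sgen f" "0 \<le> X" shows "0 < psi f X" "psi f X \<le> 1" "f (psi f X) = X"
proof -
  obtain x where x: "0 < x" "x \<le> 1" "f x = X" using sgen_ex[OF assms] by blast
  have u: "\<And>y. 0 < y \<and> y \<le> 1 \<and> f y = X \<Longrightarrow> y = x"
    using x sgen_less_iff[OF assms(1)] by (metis less_irrefl linorder_neqE_linordered_idom)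
  have "psi f X = x" unfolding psi_def using x u by (intro the_equality) blast+
  then show "0 < psi f X" "psi f X \<le> 1" "f (psi f X) = X" using x by auto
qed

lemma psi_f: assumes "sgen f" "0 < x" "x \<le> 1" shows "psi f (f x) = x"
proof -
  have "f x \<ge> 0" using sgen_nonneg assms by blast
  then have "0 < psi f (f x)" "psi f (f x) \<le> 1" "f (psi f (f x)) = f x" using psi assms by auto
  then show ?thesis using sgen_less_iff[OF assms(1)] assms
    by (metis less_irrefl linorder_neqE_linordered_idom)
qed

lemma psi_le_iff: assumes "sgen f" "0 \<le> X" "0 \<le> Y" shows "psi f X \<le> psi f Y \<longleftrightarrow> Y \<le> X"
  using sgen_le_iff[OF assms(1), of "psi f X" "psi f Y"] psi[OF assms(1) assms(2)] psi[OF assms(1) assms(3)]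
  by auto

lemma psi_less_iff: assumes "sgen f" "0 \<le> X" "0 \<le> Y" shows "psi f X < psi f Y \<longleftrightarrow> Y < X"
  using psi_le_iff[OF assms(1)] assms by (meson not_le)

lemma le_psi_iff: assumes "sgen f" "0 \<le> X" "0 < x" "x \<le> 1" shows "x \<le> psi f X \<longleftrightarrow> X \<le> f x"
  using sgen_le_iff[OF assms(1), of "psi f X" x] psi[OF assms(1) assms(2)] assms by auto

lemma less_psi_iff: assumes "sgen f" "0 \<le> X" "0 < x" "x \<le> 1" shows "x < psi f X \<longleftrightarrow> X < f x"
  using sgen_less_iff[OF assms(1), of "psi f X" x] psi[OF assms(1) assms(2)] assms by auto

lemma midconv_chord:
  fixes g :: "real \<Rightarrow> real"
  assumes ab: "a < b" and cont: "continuous_on {a..b} g"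
    and mid: "\<And>x y. x \<in> {a..b} \<Longrightarrow> y \<in> {a..b} \<Longrightarrow> g ((x+y)/2) \<le> (g x + g y)/2"
    and x: "x \<in> {a..b}"
  shows "g x \<le> g a + (x - a)/(b - a) * (g b - g a)"
proof (rule ccontr)
  assume neg: "\<not> ?thesis"
  define k where "k = (g b - g a)/(b - a)"
  define h where "h z = g z - (g a + (z - a) * k)" for z
  have hmid: "h ((x+y)/2) \<le> (h x + h y)/2" if "x \<in> {a..b}" "y \<in> {a..b}" for x y
  proof -
    have e1: "h ((x+y)/2) = g ((x+y)/2) - g a - ((x - a) * k + (y - a) * k)/2"
      unfolding h_def by (simp add: field_simps)
    have e2: "(h x + h y)/2 = (g x + g y)/2 - g a - ((x - a) * k + (y - a) * k)/2"
      unfolding h_def by (simp add: field_simps)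
    show ?thesis unfolding e1 e2 using mid[OF that] by linarith
  qed
  have hcont: "continuous_on {a..b} h" unfolding h_def
    by (intro continuous_intros cont)
  have ha: "h a = 0" and hb: "h b = 0" using ab by (auto simp: h_def k_def)
  have hx: "h x > 0" using neg by (simp add: h_def k_def)
  obtain x0 where x0: "x0 \<in> {a..b}" "\<And>y. y \<in> {a..b} \<Longrightarrow> h y \<le> h x0"
    using continuous_attains_sup[OF compact_Icc _ hcont] ab by fastforce
  define M where "M = h x0"
  have Mpos: "M > 0" using x0(2)[OF x] hx by (simp add: M_def)
  define S where "S = {z \<in> {a..b}. h z = M}"
  have Sclosed: "closed S" unfolding S_def by (rule continuous_closed_preimage_constant[OF hcont]) simp
  have Sne: "S \<noteq> {}" using x0 by (auto simp: S_def M_def)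
  have Sbdd: "bdd_below S" unfolding S_def by (rule bdd_belowI[of _ a]) auto
  define c where "c = Inf S"
  have cS: "c \<in> S" unfolding c_def using closed_contains_Inf[OF Sne Sbdd Sclosed] .
  then have c: "a \<le> c" "c \<le> b" "h c = M" by (auto simp: S_def)
  have "c \<noteq> a" "c \<noteq> b" using c ha hb Mpos by auto
  then have cab: "a < c" "c < b" using c by auto
  define e where "e = min (c - a) (b - c)"
  have e: "e > 0" "a \<le> c - e" "c + e \<le> b" using cab by (auto simp: e_def)
  have m1: "c - e \<in> {a..b}" "c + e \<in> {a..b}" using e cab by auto
  have "h c \<le> (h (c - e) + h (c + e))/2" using hmid[OF m1] by simp
  moreover have "h (c + e) \<le> M" using x0(2)[OF m1(2)] by (simp add: M_def)
  moreover have "h (c - e) < M"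
  proof -
    have "c - e \<notin> S"
    proof
      assume "c - e \<in> S"
      then have "c \<le> c - e" unfolding c_def using Sbdd by (rule cInf_lower)
      then show False using e by simp
    qed
    then have "h (c - e) \<noteq> M" using m1 by (auto simp: S_def)
    moreover have "h (c - e) \<le> M" using x0(2)[OF m1(1)] by (simp add: M_def)
    ultimately show ?thesis by simp
  qed
  ultimately show False using c by simp
qed

lemma midconv_convex:
  fixes g :: "real \<Rightarrow> real"
  assumes cont: "\<And>a b. 0 \<le> a \<Longrightarrow> a < b \<Longrightarrow> continuous_on {a..b} g"
    and mid: "\<And>x y. 0 \<le> x \<Longrightarrow> 0 \<le> y \<Longrightarrow> g ((x+y)/2) \<le> (g x + g y)/2"
  shows "convex_on {0..} g"
proof (rule convex_on_linorderI)
  show "convex {0::real..}" by (rule convex_real_interval)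
  fix t x y :: real assume t: "t > 0" "t < 1" and xy: "x \<in> {0..}" "y \<in> {0..}" "x < y"
  define z where "z = (1 - t) *\<^sub>R x + t *\<^sub>R y"
  have z: "z = x + t * (y - x)" by (simp add: z_def algebra_simps)
  have "t * (y - x) \<le> 1 * (y - x)" using t xy by (intro mult_right_mono) auto
  moreover have "0 \<le> t * (y - x)" using t xy by simp
  ultimately have zi: "z \<in> {x..y}" unfolding z by simp
  have "g z \<le> g x + (z - x)/(y - x) * (g y - g x)"
    by (rule midconv_chord[OF xy(3) cont mid zi]) (use xy in auto)
  also have "(z - x)/(y - x) = t" using xy by (simp add: z)
  finally have "g z \<le> (1 - t) * g x + t * g y" by (simp add: algebra_simps)
  then show "g ((1 - t) *\<^sub>R x + t *\<^sub>R y) \<le> (1 - t) * g x + t * g y"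
    unfolding z_def .
qed

lemma psi_cont:
  assumes f: "sgen f" and ab: "0 \<le> a" "a < b"
  shows "continuous_on {a..b} (psi f)"
proof -
  define s where "s = {psi f b..psi f a}"
  have "0 < psi f b" "psi f a \<le> 1" using psi[OF f] ab by auto
  then have s01: "s \<subseteq> {0<..1}" by (auto simp: s_def)
  have "continuous_on s f" using continuous_on_subset[OF sgen_cont[OF f] s01] .
  moreover have "compact s" by (simp add: s_def)
  moreover have "\<forall>x\<in>s. psi f (f x) = x" using s01 psi_f[OF f] by auto
  ultimately have "continuous_on (f ` s) (psi f)" by (rule continuous_on_inv)
  moreover have "f ` s = {a..b}"
  proof
    show "f ` s \<subseteq> {a..b}"
    proof
      fix z assume "z \<in> f ` s"
      then obtain x where x: "x \<in> s" "z = f x" by blast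
      have "x \<le> psi f a" "psi f b \<le> x" using x by (auto simp: s_def)
      moreover have "0 < x" "x \<le> 1" using x(1) s01 by auto
      moreover have "0 < psi f b" "psi f b \<le> 1" using psi[OF f, of b] ab by auto
      ultimately have "a \<le> f x" "f x \<le> f (psi f b)" using le_psi_iff[OF f, of a x]
        sgen_le_iff[OF f, of x "psi f b"] ab by auto
      then have "a \<le> f x" "f x \<le> b" using psi(3)[OF f, of b] ab by auto
      then show "z \<in> {a..b}" using x by simp
    qed
    show "{a..b} \<subseteq> f ` s"
    proof
      fix z assume z: "z \<in> {a..b}"
      then have "psi f z \<in> s" using psi_le_iff[OF f] ab by (auto simp: s_def)
      moreover have "f (psi f z) = z" using psi[OF f] z ab by auto
      ultimately show "z \<in> f ` s" by (metis image_eqI)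
    qed
  qed
  ultimately show ?thesis by simp
qed

lemma sgen_convex_from_psi:
  assumes f: "sgen f" and pc: "convex_on {0..} (psi f)"
    and x: "0 < x" "x \<le> 1" and y: "0 < y" "y \<le> 1" and t: "0 \<le> t" "t \<le> 1"
  shows "f ((1 - t) * x + t * y) \<le> (1 - t) * f x + t * f y"
proof -
  have X: "0 \<le> f x" and Y: "0 \<le> f y" using sgen_nonneg f x y by auto
  define Z where "Z = (1 - t) * f x + t * f y"
  have Z: "0 \<le> Z" using X Y t by (simp add: Z_def)
  have "psi f Z \<le> (1 - t) * psi f (f x) + t * psi f (f y)"
    using convex_onD[OF pc t, of "f x" "f y"] X Y by (simp add: Z_def)
  also have "\<dots> = (1 - t) * x + t * y" using psi_f[OF f] x y by simp
  finally have le: "psi f Z \<le> (1 - t) * x + t * y" .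
  have p: "0 < (1 - t) * x + t * y" "(1 - t) * x + t * y \<le> 1"
  proof -
    show "0 < (1 - t) * x + t * y"
      using x y t by (cases "t = 0") (auto intro: add_nonneg_pos add_pos_nonneg)
    have "(1 - t) * x + t * y \<le> (1 - t) * 1 + t * 1"
      using x y t by (intro add_mono mult_left_mono) auto
    then show "(1 - t) * x + t * y \<le> 1" by simp
  qed
  have "f ((1 - t) * x + t * y) \<le> f (psi f Z)"
    using sgen_le_iff[OF f p psi(1,2)[OF f Z]] le by simp
  then show ?thesis using psi(3)[OF f Z] by (simp add: Z_def)
qed

definition fr :: "(real \<Rightarrow> ereal) \<Rightarrow> real \<Rightarrow> real" where
  "fr \<phi> x = real_of_ereal (\<phi> x)"

lemma gen_cont: "generator \<phi> \<Longrightarrow> continuous_on {0..1} \<phi>" unfolding generator_def by blast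
lemma gen_less: "generator \<phi> \<Longrightarrow> 0 \<le> s \<Longrightarrow> s < t \<Longrightarrow> t \<le> 1 \<Longrightarrow> \<phi> t < \<phi> s"
  unfolding generator_def by blast
lemma gen_nonneg: "generator \<phi> \<Longrightarrow> 0 \<le> s \<Longrightarrow> s \<le> 1 \<Longrightarrow> 0 \<le> \<phi> s"
  unfolding generator_def by auto
lemma gen_1: "generator \<phi> \<Longrightarrow> \<phi> 1 = 0" unfolding generator_def by blast

lemma gen_fin: assumes "generator \<phi>" "0 < x" "x \<le> 1" shows "\<phi> x = ereal (fr \<phi> x)"
proof -
  have "\<phi> x < \<phi> 0" using gen_less[OF assms(1), of 0 x] assms by simp
  then have "\<phi> x \<noteq> \<infinity>" by auto
  moreover have "0 \<le> \<phi> x" using gen_nonneg[OF assms(1)] assms by simp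
  ultimately show ?thesis unfolding fr_def by (cases "\<phi> x") auto
qed

lemma gen_right0: assumes "generator \<phi>" shows "(\<phi> \<longlongrightarrow> \<phi> 0) (at_right 0)"
  using continuous_on_Icc_at_rightD[OF gen_cont[OF assms]] by simp

lemma gen_sgen: assumes g: "generator \<phi>" and s: "\<phi> 0 = \<infinity>" shows "sgen (fr \<phi>)"
  unfolding sgen_def
proof (intro conjI allI impI)
  have "continuous_on {0<..1} \<phi>" using gen_cont[OF g] by (rule continuous_on_subset) auto
  moreover have "continuous_on (\<phi> ` {0<..1}) real_of_ereal"
  proof (intro continuous_at_imp_continuous_on ballI)
    fix y assume "y \<in> \<phi> ` {0<..1}"
    then obtain x where "x \<in> {0<..1}" "y = \<phi> x" by blast
    then have "y = ereal (fr \<phi> x)" using gen_fin[OF g] by auto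
    then show "isCont real_of_ereal y" by (intro continuous_at_of_ereal) simp
  qed
  ultimately have "continuous_on {0<..1} (real_of_ereal \<circ> \<phi>)" by (rule continuous_on_compose)
  then show "continuous_on {0<..1} (fr \<phi>)" by (simp add: fr_def o_def)
next
  fix s t :: real assume st: "0 < s \<and> s < t \<and> t \<le> 1"
  then have "\<phi> t < \<phi> s" using gen_less[OF g, of s t] by simp
  then show "fr \<phi> t < fr \<phi> s" using gen_fin[OF g, of s] gen_fin[OF g, of t] st by simp
next
  show "fr \<phi> 1 = 0" using gen_1[OF g] by (simp add: fr_def)
next
  have lim: "(\<phi> \<longlongrightarrow> \<infinity>) (at_right 0)" using gen_right0[OF g] s by simp
  have "eventually (\<lambda>x. \<phi> x = ereal (fr \<phi> x)) (at_right (0::real))"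
    unfolding eventually_at_right_field by (intro exI[of _ 1]) (auto intro!: gen_fin[OF g])
  then have "((\<lambda>x. ereal (fr \<phi> x)) \<longlongrightarrow> \<infinity>) (at_right 0)"
    by (rule Lim_transform_eventually[OF lim])
  then show "filterlim (fr \<phi>) at_top (at_right 0)" by (simp add: tendsto_PInfty_eq_at_top)
qed

lemma pseudo_inv_fin: assumes g: "generator \<phi>" and s: "\<phi> 0 = \<infinity>" and X: "0 \<le> X"
  shows "pseudo_inv \<phi> (ereal X) = psi (fr \<phi>) X"
proof -
  have f: "sgen (fr \<phi>)" using gen_sgen[OF g s] .
  have "{t \<in> {0..1}. \<phi> t \<le> ereal X} = {psi (fr \<phi>) X..1}"
  proof (intro set_eqI iffI)
    fix t assume t: "t \<in> {t \<in> {0..1}. \<phi> t \<le> ereal X}"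
    then have "t \<noteq> 0" using s by auto
    then have t0: "0 < t" "t \<le> 1" using t by auto
    then have "fr \<phi> t \<le> X" using t gen_fin[OF g t0] by auto
    then show "t \<in> {psi (fr \<phi>) X..1}" using le_psi_iff[OF f X] t0 psi[OF f X]
      sgen_le_iff[OF f t0 psi(1,2)[OF f X]] by auto
  next
    fix t assume t: "t \<in> {psi (fr \<phi>) X..1}"
    then have t0: "0 < t" "t \<le> 1" using psi[OF f X] by auto
    have "fr \<phi> t \<le> fr \<phi> (psi (fr \<phi>) X)"
      using sgen_le_iff[OF f t0 psi(1,2)[OF f X]] t by auto
    then have "fr \<phi> t \<le> X" using psi(3)[OF f X] by simp
    then show "t \<in> {t \<in> {0..1}. \<phi> t \<le> ereal X}" using gen_fin[OF g t0] t0 by auto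
  qed
  then show ?thesis unfolding pseudo_inv_def using psi(2)[OF f X] by simp
qed

lemma arch_val:
  fixes C :: "real^'d \<Rightarrow> real"
  assumes a: "archimedean_copula C \<phi>" and s: "\<phi> 0 = \<infinity>" and u: "\<And>k. 0 < u$k \<and> u$k \<le> 1"
  shows "C u = psi (fr \<phi>) (\<Sum>k\<in>UNIV. fr \<phi> (u$k))"
proof -
  have g: "generator \<phi>" using a unfolding archimedean_copula_def by blast
  have cube: "in_unit_cube u" using u unfolding in_unit_cube_def by (auto intro: less_imp_le)
  have "C u = pseudo_inv \<phi> (\<Sum>k\<in>UNIV. \<phi> (u$k))" using a cube unfolding archimedean_copula_def by blast
  also have "(\<Sum>k\<in>UNIV. \<phi> (u$k)) = (\<Sum>k\<in>UNIV. ereal (fr \<phi> (u$k)))"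
    using gen_fin[OF g] u by (intro sum.cong) auto
  also have "\<dots> = ereal (\<Sum>k\<in>UNIV. fr \<phi> (u$k))" by (rule sum_ereal)
  also have "0 \<le> (\<Sum>k\<in>UNIV. fr \<phi> (u$k))"
    using sgen_nonneg[OF gen_sgen[OF g s]] u by (intro sum_nonneg) auto
  then have "pseudo_inv \<phi> (ereal (\<Sum>k\<in>UNIV. fr \<phi> (u$k))) = psi (fr \<phi>) (\<Sum>k\<in>UNIV. fr \<phi> (u$k))"
    by (rule pseudo_inv_fin[OF g s])
  finally show ?thesis .
qed

lemma arch_nonneg:
  fixes C :: "real^'d \<Rightarrow> real"
  assumes a: "archimedean_copula C \<phi>" and u: "in_unit_cube u"
  shows "0 \<le> C u"
proof -
  have g: "generator \<phi>" using a unfolding archimedean_copula_def by blast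
  have "C u = pseudo_inv \<phi> (\<Sum>k\<in>UNIV. \<phi> (u$k))" using a u unfolding archimedean_copula_def by blast
  moreover have "0 \<le> (\<Sum>k\<in>UNIV. \<phi> (u$k))"
    using u gen_nonneg[OF g] unfolding in_unit_cube_def by (intro sum_nonneg) auto
  then have "1 \<in> {t \<in> {0..1}. \<phi> t \<le> (\<Sum>k\<in>UNIV. \<phi> (u$k))}" using gen_1[OF g] by auto
  then have "0 \<le> Inf {t \<in> {0..1}. \<phi> t \<le> (\<Sum>k\<in>UNIV. \<phi> (u$k))}"
    by (intro cInf_greatest) auto
  ultimately show ?thesis unfolding pseudo_inv_def by simp
qed

lemma arch_nonstrict_zero:
  fixes C :: "real^'d \<Rightarrow> real"
  assumes a: "archimedean_copula C \<phi>" and s: "\<phi> 0 \<noteq> \<infinity>" and pq: "(p::'d) \<noteq> q"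
  shows "\<exists>\<delta>>0. \<forall>u. in_unit_cube u \<and> (\<forall>k. u$k < \<delta>) \<longrightarrow> C u = 0"
proof -
  have g: "generator \<phi>" using a unfolding archimedean_copula_def by blast
  have "0 \<le> \<phi> 0" using gen_nonneg[OF g] by simp
  then obtain c where c: "\<phi> 0 = ereal c" using s by (cases "\<phi> 0") auto
  have "\<phi> 1 < \<phi> 0" using gen_less[OF g, of 0 1] by simp
  then have cpos: "c > 0" using gen_1[OF g] c by simp
  have "eventually (\<lambda>x. ereal (c/2) < \<phi> x) (at_right (0::real))"
    using order_tendstoD(1)[OF gen_right0[OF g], of "ereal (c/2)"] c cpos by simp
  then obtain b where b: "b > 0" "\<And>y. y > 0 \<Longrightarrow> y < b \<Longrightarrow> ereal (c/2) < \<phi> y"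
    unfolding eventually_at_right_field by blast
  show ?thesis
  proof (intro exI[of _ b] conjI allI impI)
    show "b > 0" by fact
    fix u :: "real^'d" assume u: "in_unit_cube u \<and> (\<forall>k. u$k < b)"
    have big: "ereal (c/2) \<le> \<phi> (u$k)" for k
    proof (cases "u$k = 0")
      case True then show ?thesis using c cpos by simp
    next
      case False then have "u$k > 0" using u unfolding in_unit_cube_def by (metis less_eq_real_def)
      then show ?thesis using b(2)[of "u$k"] u by (simp add: less_imp_le)
    qed
    have "\<phi> 0 = ereal (c/2) + ereal (c/2)" using c by simp
    also have "\<dots> \<le> \<phi> (u$p) + \<phi> (u$q)" by (intro add_mono big)
    also have "\<dots> = (\<Sum>k\<in>{p,q}. \<phi> (u$k))" using pq by simp
    also have "\<dots> \<le> (\<Sum>k\<in>UNIV. \<phi> (u$k))"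
      using u gen_nonneg[OF g] unfolding in_unit_cube_def by (intro sum_mono2) auto
    finally have X: "\<phi> 0 \<le> (\<Sum>k\<in>UNIV. \<phi> (u$k))" .
    have "C u = pseudo_inv \<phi> (\<Sum>k\<in>UNIV. \<phi> (u$k))" using a u unfolding archimedean_copula_def by blast
    also have "\<dots> = 0" unfolding pseudo_inv_def using X by (intro cInf_eq_minimum) auto
    finally show "C u = 0" .
  qed
qed

lemma sum_UNIV_two:
  fixes g :: "'d::finite \<Rightarrow> 'a::comm_monoid_add"
  assumes "p \<noteq> q" "\<And>k. k \<noteq> p \<Longrightarrow> k \<noteq> q \<Longrightarrow> g k = 0"
  shows "(\<Sum>k\<in>UNIV. g k) = g p + g q"
proof -
  have "(\<Sum>k\<in>UNIV. g k) = (\<Sum>k\<in>{p,q}. g k)"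
    using assms(2) by (intro sum.mono_neutral_right) auto
  then show ?thesis using assms(1) by simp
qed

lemma arch_val2:
  fixes C :: "real^'d \<Rightarrow> real"
  assumes a: "archimedean_copula C \<phi>" and s: "\<phi> 0 = \<infinity>" and pq: "p \<noteq> q"
    and x: "0 < x" "x \<le> 1" and y: "0 < y" "y \<le> 1"
  shows "C (\<chi> i. if i = p then x else if i = q then y else 1) = psi (fr \<phi>) (fr \<phi> x + fr \<phi> y)"
proof -
  have g: "generator \<phi>" using a unfolding archimedean_copula_def by blast
  have "C (\<chi> i. if i = p then x else if i = q then y else 1)
     = psi (fr \<phi>) (\<Sum>k\<in>UNIV. fr \<phi> ((\<chi> i. if i = p then x else if i = q then y else 1) $ k))"
    using x y by (intro arch_val[OF a s]) auto
  also have "(\<Sum>k\<in>UNIV. fr \<phi> ((\<chi> i. if i = p then x else if i = q then y else (1::real)) $ k))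
     = fr \<phi> x + fr \<phi> y"
    using pq sgen_1[OF gen_sgen[OF g s]] by (subst sum_UNIV_two[OF pq]) auto
  finally show ?thesis .
qed

lemma arch_face:
  fixes C :: "real^'d \<Rightarrow> real" and p q :: 'd
  assumes a: "archimedean_copula C \<phi>" and s: "\<phi> 0 = \<infinity>" and pq: "p \<noteq> q"
    and x: "0 < x1" "x1 \<le> x2" "x2 \<le> 1" and y: "0 < y1" "y1 \<le> y2" "y2 \<le> 1"
  shows "0 \<le> psi (fr \<phi>) (fr \<phi> x2 + fr \<phi> y2) - psi (fr \<phi>) (fr \<phi> x1 + fr \<phi> y2)
            - psi (fr \<phi>) (fr \<phi> x2 + fr \<phi> y1) + psi (fr \<phi>) (fr \<phi> x1 + fr \<phi> y1)"
proof -
  have cop: "copula C" using a unfolding archimedean_copula_def by blast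
  define A where "A = (\<chi> i. if i = p then x1 else if i = q then y1 else (0::real))"
  define B where "B = (\<chi> i. if i = p then x2 else if i = q then y2 else (1::real))"
  define v where "v S = (\<chi> i. if i \<in> S then A$i else B$i)" for S :: "'d set"
  define V where "V x y = (\<chi> i. if i = p then x else if i = q then y else (1::real))" for x y
  have cA: "in_unit_cube A" and cB: "in_unit_cube B" and AB: "\<forall>i. A$i \<le> B$i"
    using x y by (auto simp: in_unit_cube_def A_def B_def)
  have "0 \<le> (\<Sum>S\<in>Pow (UNIV::'d set). (-1) ^ card S * C (v S))"
    using cop cA cB AB unfolding copula_def d_increasing_def v_def by blast
  also have "(\<Sum>S\<in>Pow (UNIV::'d set). (-1) ^ card S * C (v S)) = (\<Sum>S\<in>Pow {p,q}. (-1) ^ card S * C (v S))"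
  proof (rule sum.mono_neutral_right)
    show "\<forall>S\<in>Pow UNIV - Pow {p, q}. (-1) ^ card S * C (v S) = 0"
    proof
      fix S assume "S \<in> Pow (UNIV::'d set) - Pow {p, q}"
      then obtain j where j: "j \<in> S" "j \<noteq> p" "j \<noteq> q" by auto
      have "in_unit_cube (v S)" using cA cB unfolding in_unit_cube_def v_def by auto
      moreover have "(v S)$j = 0" using j by (simp add: v_def A_def)
      ultimately have "C (v S) = 0" using cop unfolding copula_def grounded_def by blast
      then show "(-1) ^ card S * C (v S) = 0" by simp
    qed
  qed auto
  also have "Pow {p,q} = {{}, {p}, {q}, {p,q}}" by auto
  also have "(\<Sum>S\<in>{{}, {p}, {q}, {p,q}}. (-1) ^ card S * C (v S))
      = C (v {}) - C (v {p}) - C (v {q}) + C (v {p,q})" using pq by simp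
  also have vs: "v {} = V x2 y2" "v {p} = V x1 y2" "v {q} = V x2 y1" "v {p,q} = V x1 y1"
    using pq by (auto simp: vec_eq_iff v_def V_def A_def B_def)
  have c1: "C (V x2 y2) = psi (fr \<phi>) (fr \<phi> x2 + fr \<phi> y2)" unfolding V_def
    using x y by (intro arch_val2[OF a s pq]) auto
  have c2: "C (V x1 y2) = psi (fr \<phi>) (fr \<phi> x1 + fr \<phi> y2)" unfolding V_def
    using x y by (intro arch_val2[OF a s pq]) auto
  have c3: "C (V x2 y1) = psi (fr \<phi>) (fr \<phi> x2 + fr \<phi> y1)" unfolding V_def
    using x y by (intro arch_val2[OF a s pq]) auto
  have c4: "C (V x1 y1) = psi (fr \<phi>) (fr \<phi> x1 + fr \<phi> y1)" unfolding V_def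
    using x y by (intro arch_val2[OF a s pq]) auto
  note calculation
  then show ?thesis unfolding vs c1 c2 c3 c4 .
qed

lemma two_indices:
  assumes "CARD('d) \<ge> 2" obtains p q :: 'd where "p \<noteq> q"
proof -
  obtain p :: 'd where True by blast
  have "UNIV - {p} \<noteq> {}"
  proof
    assume "UNIV - {p} = {}"
    then have "UNIV \<subseteq> {p}" by auto
    then have "CARD('d) \<le> card {p}" by (rule card_mono[rotated]) simp
    then show False using assms by simp
  qed
  then obtain q where "q \<noteq> p" by blast
  then show ?thesis using that by blast
qed

lemma arch_psi_convex:
  fixes C :: "real^'d \<Rightarrow> real"
  assumes a: "archimedean_copula C \<phi>" and s: "\<phi> 0 = \<infinity>" and d: "CARD('d) \<ge> 2"
  shows "convex_on {0..} (psi (fr \<phi>))"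
proof -
  obtain p q :: 'd where pq: "p \<noteq> q" using two_indices[OF d] by blast
  have g: "generator \<phi>" using a unfolding archimedean_copula_def by blast
  define f where "f = fr \<phi>"
  have f: "sgen f" unfolding f_def by (rule gen_sgen[OF g s])
  have mid1: "psi f ((X+Y)/2) \<le> (psi f X + psi f Y)/2" if XY: "0 \<le> X" "X \<le> Y" for X Y
  proof -
    define x1 where "x1 = psi f (Y/2)"
    define x2 where "x2 = psi f (X/2)"
    have h: "0 < x1" "x1 \<le> x2" "x2 \<le> 1" "f x1 = Y/2" "f x2 = X/2"
      using psi[OF f, of "Y/2"] psi[OF f, of "X/2"] psi_le_iff[OF f, of "Y/2" "X/2"] XY
      by (auto simp: x1_def x2_def)
    have "0 \<le> psi f (f x2 + f x2) - psi f (f x1 + f x2) - psi f (f x2 + f x1) + psi f (f x1 + f x1)"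
      using arch_face[OF a s pq h(1-3) h(1-3)] unfolding f_def by simp
    then show ?thesis unfolding h by (simp add: add.commute add_divide_distrib)
  qed
  have mid: "psi f ((X+Y)/2) \<le> (psi f X + psi f Y)/2" if "0 \<le> X" "0 \<le> Y" for X Y
  proof (cases "X \<le> Y")
    case True then show ?thesis using mid1 that by blast
  next
    case False then show ?thesis using mid1[of Y X] that by (simp add: add.commute)
  qed
  show ?thesis unfolding f_def[symmetric]
    by (rule midconv_convex[OF psi_cont[OF f] mid])
qed

lemma sgen_conv3:
  assumes f: "sgen f" and pc: "convex_on {0..} (psi f)" and pqr: "0 < p" "p < q" "q < r" "r \<le> 1"
  shows "f q \<le> ((r - q) * f p + (q - p) * f r) / (r - p)"
proof -
  define t where "t = (q - p)/(r - p)"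
  have t: "0 \<le> t" "t \<le> 1" using pqr by (auto simp: t_def field_simps)
  have tr: "t * (r - p) = q - p" using pqr by (simp add: t_def)
  have "(1 - t) * p + t * r = p + t * (r - p)" by (simp add: algebra_simps)
  then have qq: "(1 - t) * p + t * r = q" using tr by simp
  have le: "f q \<le> (1 - t) * f p + t * f r"
    using sgen_convex_from_psi[OF f pc _ _ _ _ t, of p r] pqr qq by simp
  have "1 - t = (r - q)/(r - p)" using pqr by (simp add: t_def field_simps)
  then have "(1 - t) * f p + t * f r = ((r - q) * f p + (q - p) * f r) / (r - p)"
    by (simp add: t_def add_divide_distrib)
  then show ?thesis using le by simp
qed

definition mfun :: "ereal \<Rightarrow> real \<Rightarrow> ereal" where
  "mfun \<alpha> l = (if \<alpha> = \<infinity> then (if l < 1 then \<infinity> else if l = 1 then 1 else 0)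
               else ereal (l powr (- real_of_ereal \<alpha>)))"

lemma rv_lim:
  assumes rv: "regularly_varying_at0 \<phi> \<alpha>" and l: "l > 0"
  shows "((\<lambda>s. ereal (fr \<phi> (l * s) / fr \<phi> s)) \<longlongrightarrow> mfun \<alpha> l) (at_right 0)"
proof (cases "\<alpha> = \<infinity>")
  case True
  note r = rv[unfolded regularly_varying_at0_def, THEN conjunct2]
  show ?thesis
  proof (cases "l < 1")
    case l1: True
    have "filterlim (\<lambda>s. fr \<phi> (l * s) / fr \<phi> s) at_top (at_right 0)"
      using r True l l1 unfolding fr_def by simp
    then show ?thesis using True l1 by (simp add: mfun_def tendsto_PInfty_eq_at_top)
  next
    case l1: False
    show ?thesis
    proof (cases "l = 1")
      case True
      have "((\<lambda>s. fr \<phi> s / fr \<phi> s) \<longlongrightarrow> 1) (at_right 0)"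
        using r \<open>\<alpha> = \<infinity>\<close> unfolding fr_def by simp
      then show ?thesis using True \<open>\<alpha> = \<infinity>\<close> by (simp add: mfun_def tendsto_ereal one_ereal_def)
    next
      case False
      then have "l > 1" using l1 by simp
      then have "((\<lambda>s. fr \<phi> (l * s) / fr \<phi> s) \<longlongrightarrow> 0) (at_right 0)"
        using r \<open>\<alpha> = \<infinity>\<close> unfolding fr_def by simp
      then show ?thesis using False l1 \<open>\<alpha> = \<infinity>\<close> by (simp add: mfun_def tendsto_ereal zero_ereal_def)
    qed
  qed
next
  case False
  note r = rv[unfolded regularly_varying_at0_def, THEN conjunct2]
  have "((\<lambda>s. fr \<phi> (l * s) / fr \<phi> s) \<longlongrightarrow> l powr (- real_of_ereal \<alpha>)) (at_right 0)"
    using r False l unfolding fr_def by simp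
  then show ?thesis using False by (simp add: mfun_def tendsto_ereal)
qed

lemma ev_small: "(b::real) > 0 \<Longrightarrow> eventually (\<lambda>s. 0 < s \<and> s < b) (at_right 0)"
  unfolding eventually_at_right_field by (intro exI[of _ b]) auto

lemma ev_gt:
  assumes f: "sgen f" and lim: "((\<lambda>s. ereal (f (l * s) / f s)) \<longlongrightarrow> m) (at_right 0)"
    and c: "ereal c < m"
  shows "eventually (\<lambda>s. c * f s < f (l * s)) (at_right 0)"
proof -
  have "eventually (\<lambda>s. ereal c < ereal (f (l * s) / f s)) (at_right 0)"
    using order_tendstoD(1)[OF lim c] .
  moreover have "eventually (\<lambda>s. 0 < s \<and> s < 1) (at_right (0::real))" by (rule ev_small) simp
  ultimately show ?thesis
  proof eventually_elim
    case (elim s)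
    then have "0 < f s" using sgen_pos[OF f] by simp
    then show ?case using elim by (simp add: field_simps)
  qed
qed

lemma ev_lt:
  assumes f: "sgen f" and lim: "((\<lambda>s. ereal (f (l * s) / f s)) \<longlongrightarrow> m) (at_right 0)"
    and c: "m < ereal c"
  shows "eventually (\<lambda>s. f (l * s) < c * f s) (at_right 0)"
proof -
  have "eventually (\<lambda>s. ereal (f (l * s) / f s) < ereal c) (at_right 0)"
    using order_tendstoD(2)[OF lim c] .
  moreover have "eventually (\<lambda>s. 0 < s \<and> s < 1) (at_right (0::real))" by (rule ev_small) simp
  ultimately show ?thesis
  proof eventually_elim
    case (elim s)
    then have "0 < f s" using sgen_pos[OF f] by simp
    then show ?case using elim by (simp add: field_simps)
  qed
qed

lemma rv_nonneg: "regularly_varying_at0 \<phi> \<alpha> \<Longrightarrow> 0 \<le> \<alpha>"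
  unfolding regularly_varying_at0_def by blast

lemma alpha_order:
  fixes d l l' :: real
  assumes a1: "0 \<le> \<alpha>1" and a2: "0 \<le> \<alpha>2" and d: "d \<ge> 2" and ll: "0 < l" "l < l'" "l' < 1"
    and m1: "mfun \<alpha>1 l \<le> ereal d" and m2: "ereal d \<le> mfun \<alpha>2 l'"
  shows "\<alpha>1 \<noteq> \<infinity>" "\<alpha>2 \<noteq> 0" "\<alpha>1 < \<alpha>2"
proof -
  show n1: "\<alpha>1 \<noteq> \<infinity>" using m1 ll by (auto simp: mfun_def)
  show n2: "\<alpha>2 \<noteq> 0"
  proof
    assume "\<alpha>2 = 0" then show False using m2 d ll by (simp add: mfun_def split: if_splits)
  qed
  show "\<alpha>1 < \<alpha>2"
  proof (rule ccontr)
    assume "\<not> \<alpha>1 < \<alpha>2"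
    then have le: "\<alpha>2 \<le> \<alpha>1" by simp
    then have fin2: "\<alpha>2 \<noteq> \<infinity>" using n1 by auto
    obtain a1 where e1: "\<alpha>1 = ereal a1" using n1 a1 by (cases \<alpha>1) auto
    obtain a2 where e2: "\<alpha>2 = ereal a2" using fin2 a2 by (cases \<alpha>2) auto
    have a2p: "a2 > 0" using n2 a2 e2 by auto
    have "a2 \<le> a1" using le e1 e2 by simp
    have "l' powr (- a2) < l powr (- a2)" using a2p ll by (intro powr_less_mono2_neg) auto
    also have "l powr (- a2) \<le> l powr (- a1)" using \<open>a2 \<le> a1\<close> ll by (intro powr_mono') auto
    finally have "l' powr (- a2) < l powr (- a1)" .
    moreover have "d \<le> l' powr (- a2)" using m2 e2 by (simp add: mfun_def)
    moreover have "l powr (- a1) \<le> d" using m1 e1 by (simp add: mfun_def)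
    ultimately show False by simp
  qed
qed

lemma psi_le_point: assumes f: "sgen f" "0 \<le> X" "0 < x" "x \<le> 1" "f x \<le> X" shows "psi f X \<le> x"
proof -
  have "0 \<le> f x" using sgen_nonneg f by blast
  then have "psi f X \<le> psi f (f x)" using psi_le_iff[OF f(1) f(2)] f by blast
  then show ?thesis using psi_f[OF f(1) f(3) f(4)] by simp
qed

lemma td_lambda:
  fixes d L1 L2 :: real
  assumes f1: "sgen f1" and f2: "sgen f2" and d: "d \<ge> 2"
    and T1: "((\<lambda>s. psi f1 (d * f1 s) / s) \<longlongrightarrow> L1) (at_right 0)"
    and T2: "((\<lambda>s. psi f2 (d * f2 s) / s) \<longlongrightarrow> L2) (at_right 0)"
    and L: "L1 < L2"
    and lim1: "\<And>l. l > 0 \<Longrightarrow> ((\<lambda>s. ereal (f1 (l * s) / f1 s)) \<longlongrightarrow> m1 l) (at_right 0)"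
    and lim2: "\<And>l. l > 0 \<Longrightarrow> ((\<lambda>s. ereal (f2 (l * s) / f2 s)) \<longlongrightarrow> m2 l) (at_right 0)"
  shows "\<exists>l l'. 0 < l \<and> l < l' \<and> l' < 1 \<and> m1 l \<le> ereal d \<and> ereal d \<le> m2 l'"
proof -
  have ev01: "eventually (\<lambda>s. 0 < s \<and> s < 1) (at_right (0::real))" by (rule ev_small) simp
  have "eventually (\<lambda>s. 0 \<le> psi f1 (d * f1 s) / s) (at_right 0)"
    using ev01 by eventually_elim (use psi[OF f1] sgen_nonneg[OF f1] d in \<open>auto intro!: divide_nonneg_pos less_imp_le\<close>)
  then have L1nn: "0 \<le> L1" using tendsto_lowerbound[OF T1] by simp
  have "eventually (\<lambda>s. psi f2 (d * f2 s) / s \<le> 1) (at_right 0)"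
    using ev01
  proof eventually_elim
    case (elim s)
    have "0 \<le> f2 s" using sgen_nonneg[OF f2] elim by simp
    moreover have "1 * f2 s \<le> d * f2 s" using d \<open>0 \<le> f2 s\<close> by (intro mult_right_mono) auto
    ultimately have "psi f2 (d * f2 s) \<le> s" using d elim by (intro psi_le_point[OF f2]) auto
    then show ?case using elim by simp
  qed
  then have L2le: "L2 \<le> 1" using tendsto_upperbound[OF T2] by simp
  define l where "l = L1 + (L2 - L1)/3"
  define l' where "l' = L1 + 2*(L2 - L1)/3"
  have ll: "0 < l" "l < l'" "l' < 1" "L1 < l" "l' < L2" using L L1nn L2le by (auto simp: l_def l'_def field_simps)
  have m1: "m1 l \<le> ereal d"
  proof (rule ccontr)
    assume "\<not> m1 l \<le> ereal d"
    then have "ereal d < m1 l" by simp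
    from ev_gt[OF f1 lim1[OF ll(1)] this] ev01
    have "eventually (\<lambda>s. l \<le> psi f1 (d * f1 s) / s) (at_right 0)"
    proof eventually_elim
      case (elim s)
      have "0 \<le> f1 s" using sgen_nonneg[OF f1] elim by simp
      have "l * s \<le> 1" using elim ll by (simp add: mult_le_one less_imp_le)
      then have "l * s < psi f1 (d * f1 s)"
        using less_psi_iff[OF f1, of "d * f1 s" "l * s"] elim ll d \<open>0 \<le> f1 s\<close> by simp
      then show ?case using elim by (simp add: field_simps)
    qed
    then have "l \<le> L1" using tendsto_lowerbound[OF T1] by simp
    then show False using ll by simp
  qed
  have m2: "ereal d \<le> m2 l'"
  proof (rule ccontr)
    assume "\<not> ereal d \<le> m2 l'"
    then have "m2 l' < ereal d" by simp
    from ev_lt[OF f2 lim2[OF order.strict_trans[OF ll(1) ll(2)]] this] ev01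
    have "eventually (\<lambda>s. psi f2 (d * f2 s) / s \<le> l') (at_right 0)"
    proof eventually_elim
      case (elim s)
      have "0 \<le> f2 s" using sgen_nonneg[OF f2] elim by simp
      have "l' * s \<le> 1" using elim ll by (simp add: mult_le_one less_imp_le)
      then have "psi f2 (d * f2 s) \<le> l' * s"
        using elim ll d \<open>0 \<le> f2 s\<close> by (intro psi_le_point[OF f2]) auto
      then show ?case using elim by (simp add: field_simps)
    qed
    then have "L2 \<le> l'" using tendsto_upperbound[OF T2] by simp
    then show False using ll by simp
  qed
  show ?thesis using ll m1 m2 by blast
qed

lemma potter:
  assumes f1: "sgen f1" and f2: "sgen f2" and AB: "1 \<le> A" "A < B" and dl: "0 < \<delta>" "\<delta> \<le> 1"
    and h1: "\<And>x. 0 < x \<Longrightarrow> x < \<delta> \<Longrightarrow> f1 (x/2) \<le> A * f1 x"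
    and h2: "\<And>x. 0 < x \<Longrightarrow> x < \<delta> \<Longrightarrow> B * f2 x \<le> f2 (x/2)"
    and D: "D > 0"
  shows "\<exists>R\<ge>1. \<forall>s t. 0 < s \<and> s < \<delta> \<and> 0 < t \<and> t \<le> s / R \<longrightarrow> f1 t * f2 s \<le> D * f1 s * f2 t"
proof -
  have iter: "f1 (s / 2^k) \<le> A^k * f1 s \<and> B^k * f2 s \<le> f2 (s / 2^k)" if s: "0 < s" "s < \<delta>" for s k
  proof (induction k)
    case 0 then show ?case by simp
  next
    case (Suc k)
    have sk: "0 < s / 2^k" "s / 2^k < \<delta>"
    proof -
      show "0 < s / 2^k" using s by simp
      have "s / 2^k \<le> s / 1" using s by (intro divide_left_mono) auto
      then show "s / 2^k < \<delta>" using s by simp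
    qed
    have e: "s / 2 ^ Suc k = (s / 2^k) / 2" by simp
    have "f1 (s / 2 ^ Suc k) \<le> A * f1 (s / 2^k)" unfolding e by (rule h1[OF sk])
    also have "\<dots> \<le> A * (A^k * f1 s)" using Suc.IH AB by (intro mult_left_mono) auto
    finally have 1: "f1 (s / 2 ^ Suc k) \<le> A ^ Suc k * f1 s" by (simp add: mult.assoc)
    have "B ^ Suc k * f2 s = B * (B^k * f2 s)" by (simp add: mult.assoc)
    also have "\<dots> \<le> B * f2 (s / 2^k)" using Suc.IH AB by (intro mult_left_mono) auto
    also have "\<dots> \<le> f2 (s / 2 ^ Suc k)" unfolding e by (rule h2[OF sk])
    finally show ?case using 1 by simp
  qed
  have A0: "A > 0" "B > 0" using AB by auto
  have "A / B < 1" using AB by simp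
  then obtain k0 where k0: "(A / B) ^ k0 < D / A" using real_arch_pow_inv[of "D/A" "A/B"] D A0 by auto
  show ?thesis
  proof (intro exI[of _ "2^k0"] conjI allI impI)
    show "(1::real) \<le> 2 ^ k0" by simp
    fix s t :: real assume st: "0 < s \<and> s < \<delta> \<and> 0 < t \<and> t \<le> s / 2 ^ k0"
    have "\<exists>n. s / t < 2 ^ n" using real_arch_pow[of 2 "s/t"] by simp
    then have ex: "\<exists>n. s / 2 ^ n < t" using st by (auto simp: field_simps)
    define n where "n = (LEAST n. s / 2 ^ n < t)"
    have n: "s / 2 ^ n < t" unfolding n_def using LeastI_ex[OF ex] .
    have nmin: "\<And>m. m < n \<Longrightarrow> t \<le> s / 2 ^ m" unfolding n_def using not_less_Least by force
    have "t \<le> t * 2 ^ k0" using st by simp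
    moreover have "t * 2 ^ k0 \<le> s" using st by (simp add: field_simps)
    ultimately have "t \<le> s" by linarith
    have "n \<noteq> 0"
    proof
      assume "n = 0" then show False using n \<open>t \<le> s\<close> by simp
    qed
    then obtain k where k: "n = Suc k" by (cases n) auto
    have tk: "t \<le> s / 2^k" using nmin[of k] k by simp
    have kk0: "k0 \<le> k"
    proof (rule ccontr)
      assume "\<not> k0 \<le> k"
      then have "Suc k \<le> k0" by simp
      then have "(2::real) ^ Suc k \<le> 2 ^ k0" by (intro power_increasing) auto
      then have "s / 2 ^ k0 \<le> s / 2 ^ Suc k" using st by (intro divide_left_mono) auto
      then show False using n k st by simp
    qed
    have s1: "s \<le> 1" using st dl by simp
    have t1: "t \<le> 1" using \<open>t \<le> s\<close> s1 by linarith
    have pos: "0 < s / 2 ^ Suc k" "0 < s / 2^k" using st by auto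
    have p0: "(1::real) \<le> 2 ^ k" by (rule one_le_power; simp)
    have p2: "(1::real) \<le> 2 * 2 ^ k" using p0 by linarith
    have p1: "(1::real) \<le> 2 ^ Suc k" using p2 by (simp only: power_Suc)
    have "s / 2 ^ Suc k \<le> s / 1" using st p1 by (intro divide_left_mono) auto
    moreover have "s / 2 ^ k \<le> s / 1" using st p0 by (intro divide_left_mono) auto
    ultimately have "s / 2 ^ Suc k \<le> 1" "s / 2 ^ k \<le> 1" using s1 by linarith+
    then have F1: "f1 t \<le> f1 (s / 2 ^ Suc k)" and F2: "f2 (s / 2^k) \<le> f2 t"
    proof -
      assume h: "s / 2 ^ Suc k \<le> 1" "s / 2 ^ k \<le> 1"
      have "s / 2 ^ Suc k \<le> t" using n k by simp
      then show "f1 t \<le> f1 (s / 2 ^ Suc k)"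
        using sgen_le_iff[OF f1, of t "s / 2 ^ Suc k"] st t1 pos(1) h(1) by simp
      show "f2 (s / 2^k) \<le> f2 t"
        using sgen_le_iff[OF f2, of "s / 2^k" t] st t1 pos(2) h(2) tk by simp
    qed
    have I1: "f1 t \<le> A ^ Suc k * f1 s" using F1 iter[of s "Suc k"] st by simp
    have I2: "B ^ k * f2 s \<le> f2 t" using F2 iter[of s k] st by simp
    have nn: "0 \<le> f1 s" "0 \<le> f2 s" "0 \<le> f1 t" using sgen_nonneg f1 f2 st s1 t1 by auto
    have "(A / B) ^ k \<le> (A / B) ^ k0" using kk0 A0 \<open>A / B < 1\<close> by (intro power_decreasing) auto
    then have "(A / B) ^ k \<le> D / A" using k0 by simp
    then have "A * (A / B) ^ k \<le> D" using A0 by (simp add: field_simps)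
    then have "A * (A / B) ^ k * B ^ k \<le> D * B ^ k" using A0 by (intro mult_right_mono) auto
    then have AD: "A ^ Suc k \<le> D * B ^ k" using A0 by (simp add: power_divide field_simps)
    have "f1 t * f2 s \<le> (A ^ Suc k * f1 s) * f2 s" using I1 nn by (intro mult_right_mono) auto
    also have "\<dots> = A ^ Suc k * (f1 s * f2 s)" by simp
    also have "\<dots> \<le> (D * B ^ k) * (f1 s * f2 s)" using AD nn by (intro mult_right_mono) auto
    also have "\<dots> = D * f1 s * (B ^ k * f2 s)" by simp
    also have "\<dots> \<le> D * f1 s * f2 t" using I2 nn D by (intro mult_left_mono) auto
    finally show "f1 t * f2 s \<le> D * f1 s * f2 t" .
  qed
qed

lemma conv_case:
  assumes f1: "sgen f1" and f2: "sgen f2"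
    and pc1: "convex_on {0..} (psi f1)" and pc2: "convex_on {0..} (psi f2)"
    and dl: "0 < \<delta>" "\<delta> \<le> 1/2"
    and ka: "0 < \<kappa>" "\<kappa> < 1" "\<And>x. 0 < x \<Longrightarrow> x < \<delta> \<Longrightarrow> 2 * f2 x < f2 (\<kappa> * x)"
    and K: "K > 0" "\<And>x. 0 < x \<Longrightarrow> x < \<delta> \<Longrightarrow> f1 (\<kappa> * x / 2) \<le> K * f1 x"
    and c: "c > 0" "\<And>x. 0 < x \<Longrightarrow> x < \<delta> \<Longrightarrow> f2 (2 * x) \<le> (1 - c) * f2 x"
    and P: "\<And>s t. 0 < s \<Longrightarrow> s < \<delta> \<Longrightarrow> 0 < t \<Longrightarrow> t \<le> s / R \<Longrightarrow>
              f1 t * f2 s \<le> (\<kappa> * c / (2 * K)) * f1 s * f2 t"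
    and R: "R \<ge> 1"
    and st: "0 < s" "s < \<delta>" "0 < t" "t \<le> s / R"
  shows "f1 (psi f2 (f2 s + f2 t)) \<le> f1 s + f1 t"
proof -
  have "s / R \<le> s / 1" using st R by (intro divide_left_mono) auto
  then have ts: "t \<le> s" using st by simp
  have s1: "s < 1" "t < 1" using st dl ts by auto
  have nn: "0 \<le> f1 s" "0 \<le> f2 s" "0 < f1 t" "0 < f2 t" "0 < f2 s"
    using sgen_nonneg[OF f1] sgen_nonneg[OF f2] sgen_pos[OF f1] sgen_pos[OF f2] st s1 by auto
  define a where "a = psi f2 (f2 s + f2 t)"
  have a: "0 < a" "a \<le> 1" "f2 a = f2 s + f2 t" using psi[OF f2, of "f2 s + f2 t"] nn by (auto simp: a_def)
  have "f2 t \<le> f2 a" using a nn by simp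
  then have at: "a \<le> t" using sgen_le_iff[OF f2 st(3) _ a(1,2)] s1 by simp
  show ?thesis
  proof (cases "a = t")
    case True then show ?thesis using nn a_def by simp
  next
    case False
    then have at': "a < t" using at by simp
    have fst: "f2 s \<le> f2 t" using sgen_le_iff[OF f2 st(1) _ st(3)] ts s1 by simp
    have tdl: "t < \<delta>" using ts st by simp
    have "f2 a < f2 (\<kappa> * t)" using a(3) fst ka(3)[OF st(3) tdl] by simp
    then have ka_a: "\<kappa> * t < a"
      using sgen_less_iff[OF f2 a(1,2), of "\<kappa> * t"] ka st s1 by (simp add: mult_le_one less_imp_le)
    define u where "u = t - a"
    have u: "u > 0" using at' by (simp add: u_def)
    have cv1: "f1 a \<le> ((t - a) * f1 (a/2) + (a - a/2) * f1 t) / (t - a/2)"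
      using sgen_conv3[OF f1 pc1, of "a/2" a t] a at' s1 by simp
    have i1: "(a/2) * (f1 a - f1 t) \<le> u * (f1 (a/2) - f1 a)"
    proof -
      have "f1 a * (t - a/2) \<le> (t - a) * f1 (a/2) + (a - a/2) * f1 t"
        using cv1 at' a by (simp add: field_simps)
      moreover have "u * (f1 (a/2) - f1 a) - (a/2) * (f1 a - f1 t)
          = (t - a) * f1 (a / 2) + (a - a / 2) * f1 t - f1 a * (t - a / 2)"
        by (simp add: u_def field_simps)
      ultimately show ?thesis by linarith
    qed
    have fa2: "f1 (a/2) \<le> f1 (\<kappa> * t / 2)"
      using sgen_le_iff[OF f1, of "a/2" "\<kappa> * t / 2"] ka_a ka st a s1
      by (simp add: mult_le_one less_imp_le)
    have "0 \<le> f1 a" using sgen_nonneg[OF f1 a(1,2)] .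
    then have i1': "(a/2) * (f1 a - f1 t) \<le> u * (K * f1 t)"
    proof -
      have "u * (f1 (a/2) - f1 a) \<le> u * f1 (a/2)" using u \<open>0 \<le> f1 a\<close> by (simp add: mult_left_mono)
      also have "\<dots> \<le> u * (K * f1 t)" using fa2 K(2)[OF st(3) tdl] u by (intro mult_left_mono) auto
      finally show ?thesis using i1 by simp
    qed
    have cv2: "f2 t \<le> ((2 * t - t) * f2 a + (t - a) * f2 (2 * t)) / (2 * t - a)"
      using sgen_conv3[OF f2 pc2, of a t "2 * t"] a at' st dl tdl by simp
    have i2: "u * (c * f2 t) \<le> t * f2 s"
    proof -
      have "f2 t * (2 * t - a) \<le> (2 * t - t) * f2 a + (t - a) * f2 (2 * t)"
        using cv2 at' a st by (simp add: field_simps)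
      then have "u * (f2 t - f2 (2 * t)) \<le> t * f2 s" using a(3) by (simp add: u_def algebra_simps)
      moreover have "c * f2 t \<le> f2 t - f2 (2 * t)" using c(2)[OF st(3) tdl] by (simp add: algebra_simps)
      ultimately have "u * (c * f2 t) \<le> u * (f2 t - f2 (2 * t))" using u by (intro mult_left_mono) auto
      then show ?thesis using \<open>u * (f2 t - f2 (2 * t)) \<le> t * f2 s\<close> by linarith
    qed
    show ?thesis
    proof (cases "f1 a - f1 t \<le> 0")
      case True then show ?thesis using nn a_def by simp
    next
      case False
      define G where "G = f1 a - f1 t"
      have G: "G > 0" using False by (simp add: G_def)
      have "(\<kappa> * t) * G \<le> a * G" using ka_a G by (intro mult_right_mono) auto
      also have "a * G \<le> 2 * (u * (K * f1 t))" using i1' by (simp add: G_def)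
      finally have j1: "\<kappa> * t * G \<le> 2 * u * K * f1 t" by simp
      have "\<kappa> * t * G * (c * f2 t) \<le> 2 * u * K * f1 t * (c * f2 t)"
        using j1 c nn by (intro mult_right_mono) auto
      also have "\<dots> = 2 * K * f1 t * (u * (c * f2 t))" by simp
      also have "\<dots> \<le> 2 * K * f1 t * (t * f2 s)" using i2 K nn by (intro mult_left_mono) auto
      finally have j2: "t * (\<kappa> * c * G * f2 t) \<le> t * (2 * K * (f1 t * f2 s))" by (simp add: algebra_simps)
      then have j3: "\<kappa> * c * G * f2 t \<le> 2 * K * (f1 t * f2 s)" using st by simp
      also have "\<dots> \<le> 2 * K * ((\<kappa> * c / (2 * K)) * f1 s * f2 t)"
        using P[OF st] K by (intro mult_left_mono) auto
      also have "\<dots> = \<kappa> * c * f1 s * f2 t" using K by simp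
      finally have "(\<kappa> * c * f2 t) * G \<le> (\<kappa> * c * f2 t) * f1 s" by (simp add: algebra_simps)
      moreover have "\<kappa> * c * f2 t > 0" using ka c nn by simp
      ultimately have "G \<le> f1 s" by (metis mult_le_cancel_left_pos)
      then show ?thesis unfolding a_def[symmetric] G_def by simp
    qed
  qed
qed

definition Gf :: "ereal \<Rightarrow> real \<Rightarrow> real" where
  "Gf \<alpha> r = (if \<alpha> = 0 then 0 else if \<alpha> = \<infinity> then 1
     else (1 + r powr (- real_of_ereal \<alpha>)) powr (- 1 / real_of_ereal \<alpha>))"

lemma Gf_fin: assumes "0 < a" shows "Gf (ereal a) r = (1 + r powr (- a)) powr (- 1 / a)"
  using assms by (simp add: Gf_def)

lemma powr_inv_pow: fixes a X :: real assumes "0 < a" "0 < X" shows "(X powr (- 1 / a)) powr (- a) = X"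
proof -
  have "(X powr (- 1 / a)) powr (- a) = X powr ((- 1 / a) * (- a))" by (rule powr_powr)
  also have "(- 1 / a) * (- a) = 1" using assms by simp
  finally show ?thesis using assms by simp
qed

lemma one_plus_powr_pos: "0 < 1 + (r::real) powr e"
  using powr_ge_zero[of r e] by linarith

lemma Gf_fin_bounds: assumes "0 < a" "0 < r" shows "0 < Gf (ereal a) r" "Gf (ereal a) r < 1"
proof -
  have b: "1 < 1 + r powr (- a)" using assms by simp
  show "0 < Gf (ereal a) r" using assms one_plus_powr_pos[of r "-a"] by (simp add: Gf_fin)
  show "Gf (ereal a) r < 1" unfolding Gf_fin[OF assms(1)] using assms b by (intro powr_less_one) auto
qed

lemma mfun_pos_fin: "0 < a \<Longrightarrow> mfun (ereal a) l = ereal (l powr (- a))" by (simp add: mfun_def)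

lemma F1:
  assumes a0: "0 \<le> \<alpha>" and af: "\<alpha> \<noteq> \<infinity>" and r: "0 < r" and l: "0 < l" "Gf \<alpha> r < l"
  shows "mfun \<alpha> l < mfun \<alpha> r + 1"
proof (cases "\<alpha> = 0")
  case True then show ?thesis using r l by (simp add: mfun_def one_ereal_def)
next
  case False
  then obtain a where a: "\<alpha> = ereal a" "0 < a" using a0 af by (cases \<alpha>) auto
  define X where "X = 1 + r powr (- a)"
  have X: "0 < X" using r by (simp add: X_def add_pos_nonneg)
  have G: "Gf \<alpha> r = X powr (- 1 / a)" using a by (simp add: Gf_fin X_def)
  have "l powr (- a) < (X powr (- 1 / a)) powr (- a)"
    using l G a X by (intro powr_less_mono2_neg) auto
  also have "\<dots> = X" using powr_inv_pow[OF a(2) X] .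
  finally show ?thesis using a by (simp add: mfun_def X_def)
qed

lemma F2:
  assumes a0: "0 < \<alpha>" and r: "1 \<le> r" and l: "0 < l" "l < Gf \<alpha> r"
  shows "mfun \<alpha> r + 1 < mfun \<alpha> l"
proof (cases "\<alpha> = \<infinity>")
  case True
  then have "l < 1" using l by (simp add: Gf_def)
  moreover have "mfun \<alpha> r + 1 < \<infinity>" using r True by (auto simp: mfun_def)
  ultimately show ?thesis using True by (simp add: mfun_def)
next
  case False
  then obtain a where a: "\<alpha> = ereal a" "0 < a" using a0 by (cases \<alpha>) auto
  define X where "X = 1 + r powr (- a)"
  have X: "0 < X" using r by (simp add: X_def add_pos_nonneg)
  have G: "Gf \<alpha> r = X powr (- 1 / a)" using a by (simp add: Gf_fin X_def)
  have "X = (X powr (- 1 / a)) powr (- a)" using powr_inv_pow[OF a(2) X] by simp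
  also have "\<dots> < l powr (- a)"
    using l G a X by (intro powr_less_mono2_neg) auto
  finally show ?thesis using a by (simp add: mfun_def X_def)
qed

lemma F3:
  assumes a0: "0 \<le> \<alpha>" and af: "\<alpha> \<noteq> \<infinity>" and r: "0 < r" and q: "1 \<le> q"
  shows "Gf \<alpha> (q * r) \<le> q * Gf \<alpha> r"
proof (cases "\<alpha> = 0")
  case True then show ?thesis by (simp add: Gf_def)
next
  case False
  then obtain a where a: "\<alpha> = ereal a" "0 < a" using a0 af by (cases \<alpha>) auto
  have "q powr (- a) \<le> q powr 0" using q a by (intro powr_mono) auto
  then have qa: "q powr (- a) \<le> 1" using q by simp
  have e: "(q * r) powr (- a) = q powr (- a) * r powr (- a)" using q r by (simp add: powr_mult)
  have "q powr (- a) * (1 + r powr (- a)) \<le> 1 + (q * r) powr (- a)"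
    unfolding e using qa by (simp add: algebra_simps)
  moreover have "0 < q powr (- a) * (1 + r powr (- a))" using q r by (simp add: add_pos_nonneg)
  ultimately have "(1 + (q * r) powr (- a)) powr (- 1 / a) \<le> (q powr (- a) * (1 + r powr (- a))) powr (- 1 / a)"
    using a by (intro powr_mono2') auto
  also have "\<dots> = (q powr (- a)) powr (- 1 / a) * (1 + r powr (- a)) powr (- 1 / a)"
    using q r by (simp add: powr_mult add_nonneg_nonneg)
  also have "(q powr (- a)) powr (- 1 / a) = q" using q a by (simp add: powr_powr)
  finally show ?thesis using a by (simp add: Gf_fin)
qed

lemma powr_superadd: fixes z p :: real assumes z: "0 < z" and p: "1 < p" shows "1 + z powr p < (1 + z) powr p"
proof -
  have e: "(1 + z) powr p = (1 + z) * (1 + z) powr (p - 1)"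
  proof -
    have "(1 + z) powr p = (1 + z) powr (1 + (p - 1))" by simp
    also have "\<dots> = (1 + z) powr 1 * (1 + z) powr (p - 1)" by (rule powr_add)
    finally show ?thesis using z by simp
  qed
  have e2: "z powr p = z * z powr (p - 1)"
  proof -
    have "z powr p = z powr (1 + (p - 1))" by simp
    also have "\<dots> = z powr 1 * z powr (p - 1)" by (rule powr_add)
    finally show ?thesis using z by simp
  qed
  have g1: "1 < (1 + z) powr (p - 1)" using z p by (intro gr_one_powr) auto
  have g2: "z powr (p - 1) < (1 + z) powr (p - 1)" using z p by (intro powr_less_mono2) auto
  have "z * z powr (p - 1) < z * (1 + z) powr (p - 1)" using g2 z by simp
  then show ?thesis unfolding e e2 using g1 by (simp add: algebra_simps)
qed

lemma G_less:
  assumes a0: "0 \<le> \<alpha>1" and af: "\<alpha>1 \<noteq> \<infinity>" and lt: "\<alpha>1 < \<alpha>2" and r: "0 < r"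
  shows "Gf \<alpha>1 r < Gf \<alpha>2 r"
proof (cases "\<alpha>1 = 0")
  case True
  then have "0 < \<alpha>2" using lt by simp
  then show ?thesis using True Gf_fin_bounds[OF _ r] by (cases \<alpha>2) (auto simp: Gf_def)
next
  case False
  then obtain a1 where a1: "\<alpha>1 = ereal a1" "0 < a1" using a0 af by (cases \<alpha>1) auto
  show ?thesis
  proof (cases "\<alpha>2 = \<infinity>")
    case True then show ?thesis using Gf_fin_bounds[OF a1(2) r] a1 by (simp add: Gf_def)
  next
    case False
    then obtain a2 where a2: "\<alpha>2 = ereal a2" using lt by (cases \<alpha>2) auto
    have a12: "a1 < a2" using lt a1 a2 by simp
    define p where "p = a2 / a1"
    have p: "1 < p" using a12 a1 by (simp add: p_def)
    define z where "z = r powr (- a1)"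
    have z: "0 < z" using r by (simp add: z_def)
    have zp: "z powr p = r powr (- a2)" using a1 r by (simp add: z_def p_def powr_powr)
    have "Gf \<alpha>1 r = (1 + z) powr (- 1 / a1)" using a1 by (simp add: Gf_fin z_def)
    also have "\<dots> = ((1 + z) powr p) powr (- 1 / a2)" using a1 a12 z by (simp add: powr_powr p_def)
    also have "\<dots> < (1 + z powr p) powr (- 1 / a2)"
      using powr_superadd[OF z p] a1 a12 z by (intro powr_less_mono2_neg) (auto intro: add_pos_nonneg)
    also have "\<dots> = Gf \<alpha>2 r" using a2 a1 a12 zp by (simp add: Gf_fin)
    finally show ?thesis .
  qed
qed

lemma Gf_le1: "0 \<le> \<alpha> \<Longrightarrow> 0 < r \<Longrightarrow> Gf \<alpha> r \<le> 1"
  using Gf_fin_bounds[of _ r] by (cases \<alpha>) (auto simp: Gf_def less_imp_le)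

lemma Gf_nonneg: "0 \<le> \<alpha> \<Longrightarrow> 0 < r \<Longrightarrow> 0 \<le> Gf \<alpha> r"
  using Gf_fin_bounds[of _ r] by (cases \<alpha>) (auto simp: Gf_def less_imp_le)

lemma Gf_cont: "0 \<le> \<alpha> \<Longrightarrow> continuous_on {1..R} (Gf \<alpha>)"
proof (cases "\<alpha> = 0 \<or> \<alpha> = \<infinity>")
  case True then show ?thesis by (auto simp: Gf_def)
next
  case False
  assume "0 \<le> \<alpha>"
  then obtain a where a: "\<alpha> = ereal a" "0 < a" using False by (cases \<alpha>) auto
  have "continuous_on {1..R} (\<lambda>r. (1 + r powr (- a)) powr (- 1 / a))"
    using one_plus_powr_pos by (intro continuous_intros) (auto simp: less_imp_neq[symmetric])
  then show ?thesis using a by (simp add: Gf_fin)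
qed

lemma grid_q:
  assumes a0: "0 \<le> \<alpha>1" and af: "\<alpha>1 \<noteq> \<infinity>" and lt: "\<alpha>1 < \<alpha>2" and R: "1 \<le> R"
  shows "\<exists>q>1. \<forall>r\<in>{1..R}. q * Gf \<alpha>1 r < Gf \<alpha>2 r"
proof -
  have a2: "0 \<le> \<alpha>2" using a0 lt by simp
  have "continuous_on {1..R} (\<lambda>r. Gf \<alpha>2 r - Gf \<alpha>1 r)"
    by (intro continuous_intros Gf_cont a0 a2)
  then obtain r0 where r0: "r0 \<in> {1..R}" "\<And>r. r \<in> {1..R} \<Longrightarrow> Gf \<alpha>2 r0 - Gf \<alpha>1 r0 \<le> Gf \<alpha>2 r - Gf \<alpha>1 r"
    using continuous_attains_inf[OF compact_Icc, of 1 R] R by force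
  define \<delta> where "\<delta> = Gf \<alpha>2 r0 - Gf \<alpha>1 r0"
  have \<delta>: "\<delta> > 0" using G_less[OF a0 af lt, of r0] r0 by (simp add: \<delta>_def)
  show ?thesis
  proof (intro exI[of _ "1 + \<delta>/2"] conjI ballI)
    show "1 < 1 + \<delta>/2" using \<delta> by simp
    fix r assume r: "r \<in> {1..R}"
    have "(1 + \<delta>/2) * Gf \<alpha>1 r = Gf \<alpha>1 r + \<delta>/2 * Gf \<alpha>1 r" by (simp add: algebra_simps)
    also have "\<delta>/2 * Gf \<alpha>1 r \<le> \<delta>/2 * 1" using Gf_le1[OF a0, of r] r \<delta> by (intro mult_left_mono) auto
    finally have "(1 + \<delta>/2) * Gf \<alpha>1 r \<le> Gf \<alpha>1 r + \<delta>/2" by simp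
    also have "\<dots> < Gf \<alpha>1 r + \<delta>" using \<delta> by simp
    also have "\<dots> \<le> Gf \<alpha>2 r" using r0(2)[OF r] by (simp add: \<delta>_def)
    finally show "(1 + \<delta>/2) * Gf \<alpha>1 r < Gf \<alpha>2 r" .
  qed
qed

lemma mfun_fin: "1 \<le> r \<Longrightarrow> \<exists>m. mfun \<alpha> r = ereal m"
  by (auto simp: mfun_def one_ereal_def zero_ereal_def)

lemma ev_sum_lt:
  assumes f: "sgen f" and limr: "((\<lambda>s. ereal (f (r * s) / f s)) \<longlongrightarrow> ereal m) (at_right 0)"
    and liml: "((\<lambda>s. ereal (f (l * s) / f s)) \<longlongrightarrow> M) (at_right 0)" and lt: "M < ereal m + 1"
  shows "eventually (\<lambda>s. f (l * s) < f (r * s) + f s) (at_right 0)"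
proof -
  obtain c where c: "M < ereal c" "ereal c < ereal m + 1" using ereal_dense2[OF lt] by blast
  have "ereal (c - 1) < ereal m" using c(2) by simp
  from ev_lt[OF f liml c(1)] ev_gt[OF f limr this] ev_small[OF zero_less_one]
  show ?thesis
  proof eventually_elim
    case (elim s)
    then have "0 < f s" using sgen_pos[OF f] by simp
    then show ?case using elim by (simp add: algebra_simps)
  qed
qed

lemma ev_sum_gt:
  assumes f: "sgen f" and limr: "((\<lambda>s. ereal (f (r * s) / f s)) \<longlongrightarrow> ereal m) (at_right 0)"
    and liml: "((\<lambda>s. ereal (f (l * s) / f s)) \<longlongrightarrow> M) (at_right 0)" and lt: "ereal m + 1 < M"
  shows "eventually (\<lambda>s. f (r * s) + f s < f (l * s)) (at_right 0)"
proof -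
  obtain c where c: "ereal m + 1 < ereal c" "ereal c < M" using ereal_dense2[OF lt] by blast
  have "ereal m < ereal (c - 1)" using c(1) by simp
  from ev_gt[OF f liml c(2)] ev_lt[OF f limr this] ev_small[OF zero_less_one]
  show ?thesis
  proof eventually_elim
    case (elim s)
    then have "0 < f s" using sgen_pos[OF f] by simp
    then show ?case using elim by (simp add: algebra_simps)
  qed
qed

lemma psi_less_point: assumes f: "sgen f" "0 \<le> X" "0 < x" "x \<le> 1" "f x < X" shows "psi f X < x"
  using le_psi_iff[OF f(1-4)] f(5) by (meson not_le)

lemma comp_case:
  assumes f1: "sgen f1" and f2: "sgen f2"
    and lim1: "\<And>l. l > 0 \<Longrightarrow> ((\<lambda>s. ereal (f1 (l * s) / f1 s)) \<longlongrightarrow> mfun \<alpha>1 l) (at_right 0)"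
    and lim2: "\<And>l. l > 0 \<Longrightarrow> ((\<lambda>s. ereal (f2 (l * s) / f2 s)) \<longlongrightarrow> mfun \<alpha>2 l) (at_right 0)"
    and a0: "0 \<le> \<alpha>1" and af: "\<alpha>1 \<noteq> \<infinity>" and lt: "\<alpha>1 < \<alpha>2" and R: "1 \<le> R"
  shows "eventually (\<lambda>x. \<forall>r\<in>{1..R}. psi f1 (f1 (r * x) + f1 x) \<le> psi f2 (f2 (r * x) + f2 x)) (at_right 0)"
proof -
  have a2pos: "0 < \<alpha>2" using a0 lt by simp
  obtain q where q: "q > 1" "\<And>r. r \<in> {1..R} \<Longrightarrow> q * Gf \<alpha>1 r < Gf \<alpha>2 r"
    using grid_q[OF a0 af lt R] by blast
  have exN: "\<exists>n. R < q ^ n" using real_arch_pow[OF q(1)] by blast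
  define N where "N = (LEAST n. R < q ^ n)"
  have N: "R < q ^ N" unfolding N_def using LeastI_ex[OF exN] .
  have Nmin: "\<And>j. j < N \<Longrightarrow> q ^ j \<le> R" unfolding N_def using not_less_Least by force
  define lam where "lam j = (q * Gf \<alpha>1 (q ^ j) + Gf \<alpha>2 (q ^ j)) / 2" for j
  have qj: "1 \<le> q ^ j" for j using q by simp
  have lamprop: "Gf \<alpha>1 (q ^ Suc j) < lam j \<and> lam j < Gf \<alpha>2 (q ^ j) \<and> 0 < lam j \<and> lam j < 1" if j: "j < N" for j
  proof -
    have jR: "q ^ j \<in> {1..R}" using Nmin[OF j] qj by simp
    have lt1: "q * Gf \<alpha>1 (q ^ j) < Gf \<alpha>2 (q ^ j)" using q(2)[OF jR] .
    have "Gf \<alpha>1 (q ^ Suc j) = Gf \<alpha>1 (q * q ^ j)" by simp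
    also have "\<dots> \<le> q * Gf \<alpha>1 (q ^ j)" using F3[OF a0 af, of "q ^ j" q] q qj[of j] by simp
    finally have "Gf \<alpha>1 (q ^ Suc j) \<le> q * Gf \<alpha>1 (q ^ j)" .
    moreover have "0 \<le> q * Gf \<alpha>1 (q ^ j)" using Gf_nonneg[OF a0, of "q ^ j"] q qj[of j] by simp
    moreover have "Gf \<alpha>2 (q ^ j) \<le> 1" using Gf_le1[of \<alpha>2 "q ^ j"] a2pos qj[of j] by simp
    ultimately show ?thesis using lt1 by (simp add: lam_def)
  qed
  have ev1: "eventually (\<lambda>x. f1 (lam j * x) < f1 (q ^ Suc j * x) + f1 x) (at_right 0)" if j: "j < N" for j
  proof -
    have qs: "1 \<le> q ^ Suc j" using qj .
    obtain m where m: "mfun \<alpha>1 (q ^ Suc j) = ereal m" using mfun_fin[OF qs] by blast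
    have "mfun \<alpha>1 (lam j) < mfun \<alpha>1 (q ^ Suc j) + 1"
      using F1[OF a0 af, of "q ^ Suc j" "lam j"] lamprop[OF j] qs by simp
    then show ?thesis using ev_sum_lt[OF f1 lim1[of "q ^ Suc j", unfolded m] lim1[of "lam j"]] lamprop[OF j] qs m
      by simp
  qed
  have ev2: "eventually (\<lambda>x. f2 (q ^ j * x) + f2 x < f2 (lam j * x)) (at_right 0)" if j: "j < N" for j
  proof -
    have qs: "1 \<le> q ^ j" using qj .
    obtain m where m: "mfun \<alpha>2 (q ^ j) = ereal m" using mfun_fin[OF qs] by blast
    have "mfun \<alpha>2 (q ^ j) + 1 < mfun \<alpha>2 (lam j)"
      using F2[OF a2pos qs, of "lam j"] lamprop[OF j] by simp
    then show ?thesis using ev_sum_gt[OF f2 lim2[of "q ^ j", unfolded m] lim2[of "lam j"]] lamprop[OF j] qs m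
      by simp
  qed
  have "eventually (\<lambda>x. \<forall>j\<in>{..<N}. f1 (lam j * x) < f1 (q ^ Suc j * x) + f1 x
                                   \<and> f2 (q ^ j * x) + f2 x < f2 (lam j * x)) (at_right 0)"
    using ev1 ev2 by (intro eventually_ball_finite) (auto intro: eventually_conj)
  moreover have "eventually (\<lambda>x. 0 < x \<and> x < 1 / q ^ N) (at_right (0::real))"
    using q by (intro ev_small) simp
  ultimately show ?thesis
  proof eventually_elim
    case (elim x)
    have x: "0 < x" "x * q ^ N < 1" using elim q by (auto simp: field_simps)
    have qjx: "q ^ j * x \<le> 1" if "j \<le> N" for j
    proof -
      have "q ^ j \<le> q ^ N" using that q by (intro power_increasing) auto
      then have "q ^ j * x \<le> q ^ N * x" using x by (intro mult_right_mono) auto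
      moreover have "q ^ N * x < 1" using x(2) by (simp add: mult.commute)
      ultimately show ?thesis by linarith
    qed
    have "(1::real) \<le> q ^ N" using q by simp
    then have "x * 1 \<le> x * q ^ N" using x by (intro mult_left_mono) auto
    then have xx: "x \<le> 1" using x by linarith
    show ?case
    proof
      fix r assume r: "r \<in> {1..R}"
      have exn: "\<exists>n. r < q ^ n" using real_arch_pow[OF q(1)] by blast
      define n where "n = (LEAST n. r < q ^ n)"
      have n: "r < q ^ n" unfolding n_def using LeastI_ex[OF exn] .
      have nmin: "\<And>j. j < n \<Longrightarrow> q ^ j \<le> r" unfolding n_def using not_less_Least by force
      have "n \<le> N" unfolding n_def using N r by (intro Least_le) auto
      have "n \<noteq> 0"
      proof
        assume "n = 0" then show False using n r by simp
      qed
      then obtain j where j: "n = Suc j" by (cases n) auto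
      have jN: "j < N" using \<open>n \<le> N\<close> j by simp
      have qjr: "q ^ j \<le> r" using nmin[of j] j by simp
      have rq: "r < q ^ Suc j" using n j by simp
      have E: "f1 (lam j * x) < f1 (q ^ Suc j * x) + f1 x" "f2 (q ^ j * x) + f2 x < f2 (lam j * x)"
        using elim jN by auto
      have L: "0 < lam j" "lam j < 1" using lamprop[OF jN] by auto
      have lx: "0 < lam j * x" "lam j * x \<le> 1" using L x xx by (auto simp: mult_le_one less_imp_le)
      have rx: "0 < r * x" "r * x \<le> 1"
      proof -
        show "0 < r * x" using r x by simp
        have "r * x \<le> q ^ Suc j * x" using rq x by (intro mult_right_mono) auto
        then show "r * x \<le> 1" using qjx[of "Suc j"] jN by simp
      qed
      have q1x: "0 < q ^ Suc j * x" "q ^ Suc j * x \<le> 1" using qjx[of "Suc j"] jN x q by auto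
      have q0x: "0 < q ^ j * x" "q ^ j * x \<le> 1" using qjx[of j] jN x q by auto
      have nn: "0 \<le> f1 x" "0 \<le> f2 x" "0 \<le> f1 (r * x)" "0 \<le> f2 (r * x)"
        "0 \<le> f1 (q ^ Suc j * x)" "0 \<le> f2 (q ^ j * x)"
        using sgen_nonneg[OF f1] sgen_nonneg[OF f2] x xx rx q1x q0x by auto
      have A: "f1 (q ^ Suc j * x) \<le> f1 (r * x)"
        using sgen_le_iff[OF f1 q1x rx] rq x by simp
      have B: "f2 (r * x) \<le> f2 (q ^ j * x)"
        using sgen_le_iff[OF f2 rx q0x] qjr x by simp
      have "psi f1 (f1 (r * x) + f1 x) \<le> psi f1 (f1 (q ^ Suc j * x) + f1 x)"
        using psi_le_iff[OF f1] A nn by simp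
      also have "\<dots> < lam j * x"
        using psi_less_point[OF f1 _ lx] E(1) nn by simp
      also have "\<dots> < psi f2 (f2 (q ^ j * x) + f2 x)"
        using less_psi_iff[OF f2 _ lx] E(2) nn by simp
      also have "\<dots> \<le> psi f2 (f2 (r * x) + f2 x)"
        using psi_le_iff[OF f2] B nn by simp
      finally show "psi f1 (f1 (r * x) + f1 x) \<le> psi f2 (f2 (r * x) + f2 x)" by simp
    qed
  qed
qed

lemma mfun_half_lt:
  assumes a0: "0 \<le> \<alpha>1" and af: "\<alpha>1 \<noteq> \<infinity>" and lt: "\<alpha>1 < \<alpha>2"
  shows "mfun \<alpha>1 (1/2) < mfun \<alpha>2 (1/2)"
proof -
  obtain a1 where a1: "\<alpha>1 = ereal a1" using a0 af by (cases \<alpha>1) auto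
  show ?thesis
  proof (cases "\<alpha>2 = \<infinity>")
    case True then show ?thesis using a1 by (simp add: mfun_def)
  next
    case False
    then obtain a2 where a2: "\<alpha>2 = ereal a2" using lt by (cases \<alpha>2) auto
    have "a1 < a2" using lt a1 a2 by simp
    then have "(1/2::real) powr (- a1) < (1/2) powr (- a2)" by (intro powr_less_mono') auto
    then show ?thesis using a1 a2 by (simp add: mfun_def)
  qed
qed

lemma mfun_half_ge1:
  assumes a0: "0 \<le> \<alpha>1" and af: "\<alpha>1 \<noteq> \<infinity>"
  shows "\<exists>A0. mfun \<alpha>1 (1/2) = ereal A0 \<and> 1 \<le> A0"
proof -
  obtain a1 where a1: "\<alpha>1 = ereal a1" "0 \<le> a1" using a0 af by (cases \<alpha>1) auto
  have "(1/2::real) powr 0 \<le> (1/2) powr (- a1)" using a1 by (intro powr_mono') auto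
  then show ?thesis using a1 by (simp add: mfun_def)
qed

lemma mfun_kappa:
  assumes "0 < \<alpha>2" shows "\<exists>\<kappa>. 0 < \<kappa> \<and> \<kappa> < 1 \<and> ereal 2 < mfun \<alpha>2 \<kappa>"
proof (cases "\<alpha>2 = \<infinity>")
  case True then show ?thesis by (intro exI[of _ "1/2"]) (simp add: mfun_def)
next
  case False
  then obtain a where a: "\<alpha>2 = ereal a" "0 < a" using assms by (cases \<alpha>2) auto
  define \<kappa> where "\<kappa> = (3::real) powr (- 1 / a)"
  have k: "0 < \<kappa>" "\<kappa> < 1" using a by (auto simp: \<kappa>_def intro!: powr_less_one)
  have "\<kappa> powr (- a) = 3" unfolding \<kappa>_def using powr_inv_pow[OF a(2), of 3] by simp
  then show ?thesis using k a by (intro exI[of _ \<kappa>]) (simp add: mfun_def)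
qed

lemma mfun_fin_pos: "\<alpha> \<noteq> \<infinity> \<Longrightarrow> \<exists>m. mfun \<alpha> l = ereal m"
  by (simp add: mfun_def)

lemma mfun_two: assumes "0 < \<alpha>2" shows "mfun \<alpha>2 2 < 1"
proof (cases "\<alpha>2 = \<infinity>")
  case True then show ?thesis by (simp add: mfun_def)
next
  case False
  then obtain a where a: "\<alpha>2 = ereal a" "0 < a" using assms by (cases \<alpha>2) auto
  have "(2::real) powr (- a) < 1" using a by (intro powr_less_one) auto
  then show ?thesis using a by (simp add: mfun_def)
qed

lemma ev_delta:
  assumes "eventually P (at_right (0::real))"
  obtains \<delta> where "\<delta> > 0" "\<And>x. 0 < x \<Longrightarrow> x < \<delta> \<Longrightarrow> P x"
  using assms unfolding eventually_at_right_field by blast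

lemma biv:
  assumes f1: "sgen f1" and f2: "sgen f2"
    and pc1: "convex_on {0..} (psi f1)" and pc2: "convex_on {0..} (psi f2)"
    and lim1: "\<And>l. l > 0 \<Longrightarrow> ((\<lambda>s. ereal (f1 (l * s) / f1 s)) \<longlongrightarrow> mfun \<alpha>1 l) (at_right 0)"
    and lim2: "\<And>l. l > 0 \<Longrightarrow> ((\<lambda>s. ereal (f2 (l * s) / f2 s)) \<longlongrightarrow> mfun \<alpha>2 l) (at_right 0)"
    and a0: "0 \<le> \<alpha>1" and af: "\<alpha>1 \<noteq> \<infinity>" and lt: "\<alpha>1 < \<alpha>2"
  shows "\<exists>\<epsilon>>0. \<forall>x y. 0 < x \<and> x < \<epsilon> \<and> 0 < y \<and> y < \<epsilon> \<longrightarrow> f1 (psi f2 (f2 x + f2 y)) \<le> f1 x + f1 y"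
proof -
  have a2pos: "0 < \<alpha>2" using a0 lt by simp
  obtain A0 where A0: "mfun \<alpha>1 (1/2) = ereal A0" "1 \<le> A0" using mfun_half_ge1[OF a0 af] by blast
  have "ereal A0 < mfun \<alpha>2 (1/2)" using mfun_half_lt[OF a0 af lt] A0 by simp
  then obtain A where A: "ereal A0 < ereal A" "ereal A < mfun \<alpha>2 (1/2)" using ereal_dense2 by blast
  then obtain B where B: "ereal A < ereal B" "ereal B < mfun \<alpha>2 (1/2)" using ereal_dense2 by blast
  have AB: "1 \<le> A" "A < B" using A B A0 by auto
  have e1: "eventually (\<lambda>x. f1 (1/2 * x) < A * f1 x) (at_right 0)"
    using ev_lt[OF f1 lim1[of "1/2"]] A A0 by simp
  have e2: "eventually (\<lambda>x. B * f2 x < f2 (1/2 * x)) (at_right 0)"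
    using ev_gt[OF f2 lim2[of "1/2"]] B by simp
  obtain \<kappa> where ka: "0 < \<kappa>" "\<kappa> < 1" "ereal 2 < mfun \<alpha>2 \<kappa>" using mfun_kappa[OF a2pos] by blast
  have e3: "eventually (\<lambda>x. 2 * f2 x < f2 (\<kappa> * x)) (at_right 0)"
    using ev_gt[OF f2 lim2[OF ka(1)] ka(3)] .
  obtain m where m: "mfun \<alpha>1 (\<kappa>/2) = ereal m" using mfun_fin_pos[OF af] by blast
  define K where "K = max 1 (m + 1)"
  have mK: "m < K" "K > 0" by (auto simp: K_def)
  have K: "K > 0" "mfun \<alpha>1 (\<kappa>/2) < ereal K" using m mK by auto
  have e4: "eventually (\<lambda>x. f1 (\<kappa>/2 * x) < K * f1 x) (at_right 0)"
    using ev_lt[OF f1 lim1[of "\<kappa>/2"] K(2)] ka by simp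
  obtain c0 where c0: "mfun \<alpha>2 2 < ereal c0" "ereal c0 < 1" using ereal_dense2[OF mfun_two[OF a2pos]] by blast
  define c where "c = 1 - c0"
  have c: "c > 0" using c0 by (simp add: c_def)
  have e5: "eventually (\<lambda>x. f2 (2 * x) < c0 * f2 x) (at_right 0)"
    using ev_lt[OF f2 lim2[of 2] c0(1)] by simp
  have "eventually (\<lambda>x. f1 (1/2 * x) < A * f1 x \<and> B * f2 x < f2 (1/2 * x) \<and> 2 * f2 x < f2 (\<kappa> * x)
      \<and> f1 (\<kappa>/2 * x) < K * f1 x \<and> f2 (2 * x) < c0 * f2 x) (at_right 0)"
    using e1 e2 e3 e4 e5 by (intro eventually_conj)
  then obtain \<delta>0 where \<delta>0: "\<delta>0 > 0" "\<And>x. 0 < x \<Longrightarrow> x < \<delta>0 \<Longrightarrow> f1 (1/2 * x) < A * f1 x \<and> B * f2 x < f2 (1/2 * x)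
      \<and> 2 * f2 x < f2 (\<kappa> * x) \<and> f1 (\<kappa>/2 * x) < K * f1 x \<and> f2 (2 * x) < c0 * f2 x"
    by (erule ev_delta)
  define \<delta> where "\<delta> = min \<delta>0 (1/2)"
  have \<delta>: "0 < \<delta>" "\<delta> \<le> 1/2" using \<delta>0 by (auto simp: \<delta>_def)
  have h: "f1 (1/2 * x) < A * f1 x \<and> B * f2 x < f2 (1/2 * x)
      \<and> 2 * f2 x < f2 (\<kappa> * x) \<and> f1 (\<kappa>/2 * x) < K * f1 x \<and> f2 (2 * x) < c0 * f2 x"
    if "0 < x" "x < \<delta>" for x using \<delta>0(2)[of x] that by (auto simp: \<delta>_def)
  define D where "D = \<kappa> * c / (2 * K)"
  have D: "D > 0" using ka c K by (simp add: D_def)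
  obtain R where R: "R \<ge> 1" "\<And>s t. 0 < s \<and> s < \<delta> \<and> 0 < t \<and> t \<le> s / R \<Longrightarrow> f1 t * f2 s \<le> D * f1 s * f2 t"
    using potter[OF f1 f2 AB \<delta>(1) _ _ _ D, of] \<delta> h by (force simp: less_imp_le mult.commute)
  have "eventually (\<lambda>x. \<forall>r\<in>{1..R}. psi f1 (f1 (r * x) + f1 x) \<le> psi f2 (f2 (r * x) + f2 x)) (at_right 0)"
    using comp_case[OF f1 f2 lim1 lim2 a0 af lt R(1)] .
  then obtain \<delta>1 where \<delta>1: "\<delta>1 > 0" "\<And>x. 0 < x \<Longrightarrow> x < \<delta>1 \<Longrightarrow>
       \<forall>r\<in>{1..R}. psi f1 (f1 (r * x) + f1 x) \<le> psi f2 (f2 (r * x) + f2 x)"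
    by (erule ev_delta)
  define \<epsilon> where "\<epsilon> = min \<delta> \<delta>1"
  have main: "f1 (psi f2 (f2 x + f2 y)) \<le> f1 x + f1 y"
    if xy: "0 < x" "x < \<epsilon>" "0 < y" "y < \<epsilon>" "y \<le> x" for x y
  proof (cases "x \<le> R * y")
    case True
    define r where "r = x / y"
    have r: "r \<in> {1..R}" "r * y = x" using True xy by (auto simp: r_def field_simps)
    have cmp: "psi f1 (f1 x + f1 y) \<le> psi f2 (f2 x + f2 y)"
      using \<delta>1(2)[of y] xy r by (auto simp: \<epsilon>_def)
    have x1: "x \<le> 1" "y \<le> 1" using xy \<delta> by (auto simp: \<epsilon>_def)
    have nn: "0 \<le> f1 x + f1 y" "0 \<le> f2 x + f2 y"
      using sgen_nonneg[OF f1] sgen_nonneg[OF f2] xy x1 by (auto intro: add_nonneg_nonneg)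
    have "f1 (psi f2 (f2 x + f2 y)) \<le> f1 (psi f1 (f1 x + f1 y))"
      using sgen_le_iff[OF f1 psi(1,2)[OF f2 nn(2)] psi(1,2)[OF f1 nn(1)]] cmp by simp
    also have "\<dots> = f1 x + f1 y" using psi(3)[OF f1 nn(1)] .
    finally show ?thesis .
  next
    case False
    have yR: "y \<le> x / R" using False R by (simp add: field_simps)
    show ?thesis
    proof (rule conv_case[OF f1 f2 pc1 pc2 \<delta> ka(1,2) _ K(1) _ c _ _ R(1)])
      show "\<And>x. 0 < x \<Longrightarrow> x < \<delta> \<Longrightarrow> 2 * f2 x < f2 (\<kappa> * x)" using h by blast
      show "\<And>x. 0 < x \<Longrightarrow> x < \<delta> \<Longrightarrow> f1 (\<kappa> * x / 2) \<le> K * f1 x"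
        using h by (force simp: mult.commute less_imp_le)
      show "\<And>x. 0 < x \<Longrightarrow> x < \<delta> \<Longrightarrow> f2 (2 * x) \<le> (1 - c) * f2 x"
        using h by (force simp: c_def less_imp_le)
      show "\<And>s t. 0 < s \<Longrightarrow> s < \<delta> \<Longrightarrow> 0 < t \<Longrightarrow> t \<le> s / R \<Longrightarrow>
              f1 t * f2 s \<le> \<kappa> * c / (2 * K) * f1 s * f2 t"
        using R(2) unfolding D_def by blast
      show "0 < x" "x < \<delta>" "0 < y" "y \<le> x / R" using xy yR by (auto simp: \<epsilon>_def)
    qed
  qed
  show ?thesis
  proof (intro exI[of _ \<epsilon>] conjI allI impI)
    show "\<epsilon> > 0" using \<delta> \<delta>1 by (simp add: \<epsilon>_def)
    fix x y assume xy: "0 < x \<and> x < \<epsilon> \<and> 0 < y \<and> y < \<epsilon>"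
    show "f1 (psi f2 (f2 x + f2 y)) \<le> f1 x + f1 y"
    proof (cases "y \<le> x")
      case True then show ?thesis using main xy by blast
    next
      case False then show ?thesis using main[of y x] xy by (simp add: add.commute)
    qed
  qed
qed

lemma sum_bound:
  assumes f1: "sgen f1" and f2: "sgen f2" and e1: "\<epsilon> \<le> 1"
    and eps: "\<And>x y. 0 < x \<Longrightarrow> x < \<epsilon> \<Longrightarrow> 0 < y \<Longrightarrow> y < \<epsilon> \<Longrightarrow> f1 (psi f2 (f2 x + f2 y)) \<le> f1 x + f1 y"
    and S: "finite S" "S \<noteq> {}" and u: "\<And>k. k \<in> S \<Longrightarrow> 0 < u k \<and> u k < \<epsilon>"
  shows "f1 (psi f2 (\<Sum>k\<in>S. f2 (u k))) \<le> (\<Sum>k\<in>S. f1 (u k)) \<and> psi f2 (\<Sum>k\<in>S. f2 (u k)) < \<epsilon>"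
  using S u
proof (induction S rule: finite_ne_induct)
  case (singleton k)
  then have "0 < u k" "u k \<le> 1" using e1 by auto
  then show ?case using psi_f[OF f2] singleton by simp
next
  case (insert k S)
  define v where "v = psi f2 (\<Sum>j\<in>S. f2 (u j))"
  have uS: "\<And>j. j \<in> S \<Longrightarrow> 0 < u j \<and> u j < \<epsilon>" using insert.prems by auto
  have IH: "f1 v \<le> (\<Sum>j\<in>S. f1 (u j))" "v < \<epsilon>" using insert.IH[OF uS] by (auto simp: v_def)
  have nnS: "0 \<le> (\<Sum>j\<in>S. f2 (u j))"
    using uS e1 sgen_nonneg[OF f2] by (intro sum_nonneg) (meson less_le_trans less_imp_le)
  have v: "0 < v" "v \<le> 1" "f2 v = (\<Sum>j\<in>S. f2 (u j))" using psi[OF f2 nnS] by (auto simp: v_def)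
  have uk: "0 < u k" "u k < \<epsilon>" using insert.prems by auto
  have uk1: "u k \<le> 1" using uk e1 by simp
  have s: "(\<Sum>j\<in>insert k S. f2 (u j)) = f2 (u k) + f2 v" using insert.hyps v(3) by simp
  have "f1 (psi f2 (f2 (u k) + f2 v)) \<le> f1 (u k) + f1 v" using eps[OF uk v(1) IH(2)] .
  also have "\<dots> \<le> f1 (u k) + (\<Sum>j\<in>S. f1 (u j))" using IH(1) by simp
  finally have A: "f1 (psi f2 (\<Sum>j\<in>insert k S. f2 (u j))) \<le> (\<Sum>j\<in>insert k S. f1 (u j))"
    using insert.hyps s by simp
  have "0 \<le> f2 v" using sgen_nonneg[OF f2 v(1,2)] .
  then have "psi f2 (f2 (u k) + f2 v) \<le> u k"
    using uk uk1 sgen_nonneg[OF f2 uk(1) uk1] by (intro psi_le_point[OF f2]) auto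
  then have "psi f2 (\<Sum>j\<in>insert k S. f2 (u j)) < \<epsilon>" using s uk by simp
  then show ?case using A by simp
qed

theorem mainTheorem11:
  fixes C1 C2 :: "real^'d \<Rightarrow> real" and \<phi>1 \<phi>2 :: "real \<Rightarrow> ereal" and \<alpha>1 \<alpha>2 :: ereal
  assumes "CARD('d) \<ge> 2"
    and "archimedean_copula C1 \<phi>1" and "archimedean_copula C2 \<phi>2"
    and "regularly_varying_at0 \<phi>1 \<alpha>1" and "regularly_varying_at0 \<phi>2 \<alpha>2"
    and "TD_less C1 C2"
  shows "loc_le C1 C2"
proof -
  note d = assms(1) and a1 = assms(2) and a2 = assms(3) and rv1 = assms(4) and rv2 = assms(5)
    and td = assms(6)
  obtain p q :: 'd where pq: "p \<noteq> q" using two_indices[OF d] by blast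
  have g1: "generator \<phi>1" using a1 unfolding archimedean_copula_def by blast
  have g2: "generator \<phi>2" using a2 unfolding archimedean_copula_def by blast
  define w :: "real^'d" where "w = (\<chi> i. 1)"
  have sw: "(s *\<^sub>R w) $ k = s" for s k by (simp add: w_def)
  have cube_sw: "in_unit_cube (s *\<^sub>R w)" if "0 \<le> s" "s \<le> 1" for s
    using that by (simp add: in_unit_cube_def w_def)
  have "\<forall>i. 0 < w $ i" by (simp add: w_def)
  then obtain L1 L2 where L: "has_tail_dep C1 w L1" "has_tail_dep C2 w L2" "L1 < L2"
    using td unfolding TD_less_def by blast
  have T1: "((\<lambda>s. C1 (s *\<^sub>R w) / s) \<longlongrightarrow> L1) (at_right 0)"
    and T2: "((\<lambda>s. C2 (s *\<^sub>R w) / s) \<longlongrightarrow> L2) (at_right 0)"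
    using L unfolding has_tail_dep_def by auto
  have ev01: "eventually (\<lambda>s. 0 < s \<and> s < 1) (at_right (0::real))" by (rule ev_small) simp
  have "eventually (\<lambda>s. 0 \<le> C1 (s *\<^sub>R w) / s) (at_right 0)"
    using ev01 by eventually_elim (use arch_nonneg[OF a1 cube_sw] in auto)
  then have L1nn: "0 \<le> L1" using tendsto_lowerbound[OF T1] by simp
  have ball_coord: "u $ k < e" if "u \<in> ball 0 e" for u :: "real^'d" and e k
  proof -
    have "u $ k \<le> \<bar>u $ k\<bar>" by simp
    also have "\<dots> \<le> norm u" by (rule component_le_norm_cart)
    also have "\<dots> < e" using that by (simp add: dist_norm)
    finally show ?thesis .
  qed
  show ?thesis
  proof (cases "\<phi>1 0 = \<infinity>")
    case False
    obtain \<delta> where \<delta>: "\<delta> > 0" "\<And>u. in_unit_cube u \<and> (\<forall>k. u$k < \<delta>) \<Longrightarrow> C1 u = 0"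
      using arch_nonstrict_zero[OF a1 False pq] by blast
    show ?thesis unfolding loc_le_def
    proof (intro exI[of _ \<delta>] conjI allI impI)
      show "\<delta> > 0" by fact
      fix u :: "real^'d" assume u: "u \<in> ball 0 \<delta> \<and> in_unit_cube u"
      have "C1 u = 0" using \<delta>(2)[of u] u ball_coord by blast
      then show "C1 u \<le> C2 u" using arch_nonneg[OF a2] u by simp
    qed
  next
    case s1: True
    show ?thesis
    proof (cases "\<phi>2 0 = \<infinity>")
      case False
      obtain \<delta> where \<delta>: "\<delta> > 0" "\<And>u. in_unit_cube u \<and> (\<forall>k. u$k < \<delta>) \<Longrightarrow> C2 u = 0"
        using arch_nonstrict_zero[OF a2 False pq] by blast
      have "eventually (\<lambda>s. 0 < s \<and> s < min \<delta> 1) (at_right (0::real))" by (rule ev_small) (simp add: \<delta>)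
      then have "eventually (\<lambda>s. C2 (s *\<^sub>R w) / s \<le> 0) (at_right 0)"
      proof eventually_elim
        case (elim s)
        then have "\<forall>k. (s *\<^sub>R w) $ k < \<delta>" "in_unit_cube (s *\<^sub>R w)"
          using cube_sw[of s] by (simp_all only: sw) auto
        then have "C2 (s *\<^sub>R w) = 0" using \<delta>(2)[of "s *\<^sub>R w"] by blast
        then show ?case by simp
      qed
      then have "L2 \<le> 0" using tendsto_upperbound[OF T2] by simp
      then show ?thesis using L(3) L1nn by simp
    next
      case s2: True
      define f1 where "f1 = fr \<phi>1"
      define f2 where "f2 = fr \<phi>2"
      have f1: "sgen f1" unfolding f1_def by (rule gen_sgen[OF g1 s1])
      have f2: "sgen f2" unfolding f2_def by (rule gen_sgen[OF g2 s2])
      have pc1: "convex_on {0..} (psi f1)" unfolding f1_def by (rule arch_psi_convex[OF a1 s1 d])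
      have pc2: "convex_on {0..} (psi f2)" unfolding f2_def by (rule arch_psi_convex[OF a2 s2 d])
      have lim1: "\<And>l. l > 0 \<Longrightarrow> ((\<lambda>s. ereal (f1 (l * s) / f1 s)) \<longlongrightarrow> mfun \<alpha>1 l) (at_right 0)"
        unfolding f1_def by (rule rv_lim[OF rv1])
      have lim2: "\<And>l. l > 0 \<Longrightarrow> ((\<lambda>s. ereal (f2 (l * s) / f2 s)) \<longlongrightarrow> mfun \<alpha>2 l) (at_right 0)"
        unfolding f2_def by (rule rv_lim[OF rv2])
      define dd where "dd = real CARD('d)"
      have dd: "dd \<ge> 2" using d by (simp add: dd_def)
      have val1: "C1 (s *\<^sub>R w) = psi f1 (dd * f1 s)" if "0 < s" "s \<le> 1" for s
        using arch_val[OF a1 s1, of "s *\<^sub>R w"] that by (simp add: w_def f1_def dd_def)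
      have val2: "C2 (s *\<^sub>R w) = psi f2 (dd * f2 s)" if "0 < s" "s \<le> 1" for s
        using arch_val[OF a2 s2, of "s *\<^sub>R w"] that by (simp add: w_def f2_def dd_def)
      have T1': "((\<lambda>s. psi f1 (dd * f1 s) / s) \<longlongrightarrow> L1) (at_right 0)"
      proof (rule Lim_transform_eventually[OF T1])
        show "eventually (\<lambda>s. C1 (s *\<^sub>R w) / s = psi f1 (dd * f1 s) / s) (at_right 0)"
          using ev01 by eventually_elim (simp add: val1)
      qed
      have T2': "((\<lambda>s. psi f2 (dd * f2 s) / s) \<longlongrightarrow> L2) (at_right 0)"
      proof (rule Lim_transform_eventually[OF T2])
        show "eventually (\<lambda>s. C2 (s *\<^sub>R w) / s = psi f2 (dd * f2 s) / s) (at_right 0)"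
          using ev01 by eventually_elim (simp add: val2)
      qed
      obtain l l' where ll: "0 < l" "l < l'" "l' < 1" "mfun \<alpha>1 l \<le> ereal dd" "ereal dd \<le> mfun \<alpha>2 l'"
        using td_lambda[OF f1 f2 dd T1' T2' L(3) lim1 lim2] by blast
      have ao: "\<alpha>1 \<noteq> \<infinity>" "\<alpha>1 < \<alpha>2"
        using alpha_order[OF rv_nonneg[OF rv1] rv_nonneg[OF rv2] dd ll] by auto
      obtain \<epsilon> where \<epsilon>: "\<epsilon> > 0"
        "\<And>x y. 0 < x \<and> x < \<epsilon> \<and> 0 < y \<and> y < \<epsilon> \<Longrightarrow> f1 (psi f2 (f2 x + f2 y)) \<le> f1 x + f1 y"
        using biv[OF f1 f2 pc1 pc2 lim1 lim2 rv_nonneg[OF rv1] ao] by blast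
      define e where "e = min \<epsilon> 1"
      have e: "e > 0" "e \<le> 1" "e \<le> \<epsilon>" using \<epsilon> by (auto simp: e_def)
      show ?thesis unfolding loc_le_def
      proof (intro exI[of _ e] conjI allI impI)
        show "e > 0" by fact
        fix u :: "real^'d" assume u: "u \<in> ball 0 e \<and> in_unit_cube u"
        show "C1 u \<le> C2 u"
        proof (cases "\<exists>k. u $ k = 0")
          case True
          then have "C1 u = 0" using a1 u unfolding archimedean_copula_def copula_def grounded_def by blast
          then show ?thesis using arch_nonneg[OF a2] u by simp
        next
          case False
          have uk: "0 < u $ k" "u $ k < e" for k
            using False u ball_coord[of u e k] unfolding in_unit_cube_def by (auto simp: less_le)
          have uk1: "0 < u $ k \<and> u $ k \<le> 1" for k using uk[of k] e by simp
          have C1v: "C1 u = psi f1 (\<Sum>k\<in>UNIV. f1 (u $ k))" unfolding f1_def by (rule arch_val[OF a1 s1 uk1])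
          have C2v: "C2 u = psi f2 (\<Sum>k\<in>UNIV. f2 (u $ k))" unfolding f2_def by (rule arch_val[OF a2 s2 uk1])
          have sb: "f1 (psi f2 (\<Sum>k\<in>UNIV. f2 (u $ k))) \<le> (\<Sum>k\<in>UNIV. f1 (u $ k))"
            using sum_bound[OF f1 f2 e(2), of UNIV "\<lambda>k. u $ k"] \<epsilon>(2) e uk by fastforce
          have nn2: "0 \<le> (\<Sum>k\<in>UNIV. f2 (u $ k))" using uk1 sgen_nonneg[OF f2] by (intro sum_nonneg) auto
          have nn1: "0 \<le> (\<Sum>k\<in>UNIV. f1 (u $ k))" using uk1 sgen_nonneg[OF f1] by (intro sum_nonneg) auto
          have c2: "0 < C2 u" "C2 u \<le> 1" using psi[OF f2 nn2] C2v by auto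
          have "0 \<le> f1 (C2 u)" using sgen_nonneg[OF f1 c2] .
          then have "psi f1 (\<Sum>k\<in>UNIV. f1 (u $ k)) \<le> psi f1 (f1 (C2 u))"
            using psi_le_iff[OF f1 nn1] sb C2v by simp
          also have "\<dots> = C2 u" using psi_f[OF f1 c2] .
          finally show ?thesis using C1v by simp
        qed
      qed
    qed
  qed
qed

end
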